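(* Under the assumptions and notation of the context, there exist $\delta>0$, $T_0>0$ and $C>0$ such that for $j=1,2$ and all $(t,x)\in\Omega_j$, \[ \phi_j^2\,a\le C\Delta,\qquad |\phi_j|\,|\partial_t\Delta|\le C\Delta,\qquad |\phi_j|\le C a . \]
   Context: Let $a(t,x),b(t,x)$ be real-valued real analytic functions near $(0,0)\in\mathbb R^2$ with $\Delta:=4a^3-27b^2\ge0$ on $[0,T)\times U$ ($U$ a neighborhood of $0$), $a(0,0)=0$, $\partial_ta(0,0)\ne0$ (this is the case where $p=\tau^3-a\xi^2\tau-b\xi^3$ has an effectively hyperbolic triple characteristic at $(0,0,0,1)$). By the Weierstrass preparation theorem write $\Delta(t,x)=e_2(t,x)\bar\Delta(t,x)$ near $(0,0)$, with $e_2>0$ and $\bar\Delta=t^3+a_1(x)t^2+a_2(x)t+a_3(x)$, $a_j$ real analytic with $a_j(0)=0$; let $\nu_1(x),\nu_2(x),\nu_3(x)$ be the roots in $t$ of $\bar\Delta(t,x)=0$, and $\psi(x)=\max\{0,\max_k\mathrm{Re}\,\nu_k(x)\}$. Define $\phi_1=t$, $\Omega_1=\{(t,x):|x|<\delta,\ 0\le t\le\psi(x)/2\}$, and $\phi_2=t-\psi(x)$, $\Omega_2=\{(t,x):|x|<\delta,\ \psi(x)/2\le t\le T_0\}$. *)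

theory Defs
  imports "HOL-Analysis.Analysis"
begin

definition real_analytic2_on :: "(real \<Rightarrow> real \<Rightarrow> real) \<Rightarrow> (real \<times> real) set \<Rightarrow> bool" where
  "real_analytic2_on f S \<longleftrightarrow>
     (\<forall>(t0, x0) \<in> S. \<exists>r > 0. \<exists>c :: nat \<Rightarrow> nat \<Rightarrow> real.
        \<forall>t x. \<bar>t - t0\<bar> < r \<and> \<bar>x - x0\<bar> < r \<longrightarrow>
          (\<lambda>(i, j). norm (c i j * (t - t0) ^ i * (x - x0) ^ j)) summable_on UNIV \<and>
          ((\<lambda>(i, j). c i j * (t - t0) ^ i * (x - x0) ^ j) has_sum f t x) UNIV)"

definition real_analytic1_on :: "(real \<Rightarrow> real) \<Rightarrow> real set \<Rightarrow> bool" where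
  "real_analytic1_on f S \<longleftrightarrow>
     (\<forall>x0 \<in> S. \<exists>r > 0. \<exists>c :: nat \<Rightarrow> real.
        \<forall>x. \<bar>x - x0\<bar> < r \<longrightarrow>
          (\<lambda>i. norm (c i * (x - x0) ^ i)) summable_on UNIV \<and>
          ((\<lambda>i. c i * (x - x0) ^ i) has_sum f x) UNIV)"

definition disc :: "(real \<Rightarrow> real \<Rightarrow> real) \<Rightarrow> (real \<Rightarrow> real \<Rightarrow> real) \<Rightarrow> real \<Rightarrow> real \<Rightarrow> real" where
  "disc a b t x = 4 * (a t x) ^ 3 - 27 * (b t x) ^ 2"

definition wroots :: "(real \<Rightarrow> real) \<Rightarrow> (real \<Rightarrow> real) \<Rightarrow> (real \<Rightarrow> real) \<Rightarrow> real \<Rightarrow> complex set" where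
  "wroots a1 a2 a3 x = {z. z ^ 3 + of_real (a1 x) * z ^ 2 + of_real (a2 x) * z + of_real (a3 x) = 0}"

definition psi :: "(real \<Rightarrow> real) \<Rightarrow> (real \<Rightarrow> real) \<Rightarrow> (real \<Rightarrow> real) \<Rightarrow> real \<Rightarrow> real" where
  "psi a1 a2 a3 x = max 0 (Max (Re ` wroots a1 a2 a3 x))"

end

theory Submission
  imports Defs
begin


lemma ps_tail:
  fixes c :: "nat \<Rightarrow> real"
  assumes cb: "\<And>n. \<bar>c n\<bar> \<le> B / \<rho>^n" and rho: "\<rho> > 0" and y: "\<bar>y\<bar> \<le> \<rho>/4"
  shows "summable (\<lambda>n. c n * y^n)"
    and "\<bar>(\<Sum>n. c n * y^n) - (\<Sum>n<k. c n * y^n)\<bar> \<le> 2*B*(\<bar>y\<bar>/\<rho>)^k"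
proof -
  have B0: "B \<ge> 0" using cb[of 0] by simp
  let ?q = "\<bar>y\<bar>/\<rho>"
  have q0: "0 \<le> ?q" and q1: "?q \<le> 1/4" using y rho by (auto simp: field_simps)
  have tb: "\<bar>c n * y^n\<bar> \<le> B * ?q^n" for n
  proof -
    have "\<bar>c n * y^n\<bar> = \<bar>c n\<bar> * \<bar>y\<bar>^n" by (simp add: abs_mult power_abs)
    also have "\<dots> \<le> B / \<rho>^n * \<bar>y\<bar>^n" by (rule mult_right_mono[OF cb]) simp
    also have "\<dots> = B * ?q^n" by (simp add: power_divide)
    finally show ?thesis .
  qed
  have gs: "summable (\<lambda>n. B * ?q^n)" using q0 q1 rho by (intro summable_mult summable_geometric) auto
  show sm: "summable (\<lambda>n. c n * y^n)"
    by (rule summable_comparison_test'[OF gs]) (use tb in auto)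
  have split: "(\<Sum>n. c n * y^n) = (\<Sum>n. c (n+k) * y^(n+k)) + (\<Sum>n<k. c n * y^n)"
    using suminf_split_initial_segment[OF sm, of k] by simp
  have tb2: "norm (c (n+k) * y^(n+k)) \<le> B * ?q^k * (1/4)^n" for n
  proof -
    have "norm (c (n+k) * y^(n+k)) \<le> B * ?q^(n+k)" using tb[of "n+k"] by simp
    also have "\<dots> = B * ?q^k * ?q^n" by (simp add: power_add)
    also have "\<dots> \<le> B * ?q^k * (1/4)^n"
      by (intro mult_left_mono power_mono q1 q0) (use B0 q0 in auto)
    finally show ?thesis .
  qed
  have gs2: "summable (\<lambda>n. B * ?q^k * (1/4::real)^n)" by (intro summable_mult summable_geometric) auto
  have "norm (\<Sum>n. c (n+k) * y^(n+k)) \<le> (\<Sum>n. B * ?q^k * (1/4::real)^n)"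
    by (rule norm_suminf_le[OF tb2 gs2])
  also have "\<dots> = B * ?q^k * (4/3)"
    using suminf_geometric[of "1/4::real"] by (subst suminf_mult) auto
  also have "\<dots> \<le> 2*B*?q^k" using B0 q0 by (simp add: mult_left_mono)
  finally show "\<bar>(\<Sum>n. c n * y^n) - (\<Sum>n<k. c n * y^n)\<bar> \<le> 2*B*?q^k"
    using split by simp
qed

lemma ps_summable:
  fixes c :: "nat \<Rightarrow> real"
  assumes cb: "\<And>n. \<bar>c n\<bar> \<le> B / \<rho>^n" and rho: "\<rho> > 0" and y: "\<bar>y\<bar> < \<rho>"
  shows "summable (\<lambda>n. c n * y^n)"
proof -
  let ?q = "\<bar>y\<bar>/\<rho>"
  have q0: "0 \<le> ?q" and q1: "?q < 1" using y rho by (auto simp: field_simps)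
  have tb: "norm (c n * y^n) \<le> B * ?q^n" for n
  proof -
    have "\<bar>c n * y^n\<bar> = \<bar>c n\<bar> * \<bar>y\<bar>^n" by (simp add: abs_mult power_abs)
    also have "\<dots> \<le> B / \<rho>^n * \<bar>y\<bar>^n" by (rule mult_right_mono[OF cb]) simp
    also have "\<dots> = B * ?q^n" by (simp add: power_divide)
    finally show ?thesis by simp
  qed
  have gs: "summable (\<lambda>n. B * ?q^n)" using q0 q1 by (intro summable_mult summable_geometric) auto
  show ?thesis by (rule summable_comparison_test'[OF gs]) (use tb in auto)
qed

lemma ps_deriv:
  fixes c :: "nat \<Rightarrow> real"
  assumes cb: "\<And>n. \<bar>c n\<bar> \<le> B / \<rho>^n" and rho: "\<rho> > 0" and y: "\<bar>y\<bar> < \<rho>"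
  shows "((\<lambda>s. \<Sum>n. c n * s^n) has_real_derivative (\<Sum>n. diffs c n * y^n)) (at y)"
  by (rule termdiffs_strong'[where K=\<rho>]) (use ps_summable[OF cb rho] y in auto)

lemma ps_deriv2:
  fixes c :: "nat \<Rightarrow> real"
  assumes cb: "\<And>n. \<bar>c n\<bar> \<le> B / \<rho>^n" and rho: "\<rho> > 0"
  shows "((\<lambda>s. \<Sum>n. diffs c n * s^n) has_real_derivative (2 * c 2)) (at 0)"
proof -
  have sm: "summable (\<lambda>n. diffs c n * z^n)" if "norm z < \<rho>" for z :: real
    by (rule termdiff_converges[where K=\<rho>]) (use ps_summable[OF cb rho] that in auto)
  have "((\<lambda>s. \<Sum>n. diffs c n * s^n) has_real_derivative (\<Sum>n. diffs (diffs c) n * 0^n)) (at 0)"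
    by (rule termdiffs_strong'[where K=\<rho>]) (use sm rho in auto)
  moreover have "(\<Sum>n. diffs (diffs c) n * (0::real)^n) = 2 * c 2"
    by (simp add: diffs_def numeral_2_eq_2)
  ultimately show ?thesis by simp
qed

lemma ps_deriv_bound:
  fixes c :: "nat \<Rightarrow> real"
  assumes cb: "\<And>n. \<bar>c n\<bar> \<le> B / \<rho>^n" and rho: "\<rho> > 0" and y: "\<bar>y\<bar> \<le> \<rho>/4"
  shows "\<bar>\<Sum>n. diffs c n * y^n\<bar> \<le> 2*B/\<rho>"
proof -
  have B0: "B \<ge> 0" using cb[of 0] by simp
  have tb: "norm (diffs c n * y^n) \<le> B/\<rho> * (1/2)^n" for n
  proof -
    have "norm (diffs c n * y^n) = real (Suc n) * \<bar>c (Suc n)\<bar> * \<bar>y\<bar>^n"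
      by (simp add: diffs_def abs_mult power_abs)
    also have "\<dots> \<le> real (Suc n) * (B / \<rho>^(Suc n)) * (\<rho>/4)^n"
      by (intro mult_mono mult_left_mono cb power_mono y) (use B0 rho in auto)
    also have "\<dots> = B/\<rho> * (real (Suc n) / 2^n) * (1/2)^n"
    proof -
      have e: "(\<rho>/4)^n = \<rho>^n * ((1/2)^n * (1/2)^n)"
        by (simp add: power_divide flip: power_mult_distrib)
      have "\<rho>^(Suc n) = \<rho> * \<rho>^n" by simp
      then show ?thesis unfolding e using rho
        by (simp add: power_one_over divide_simps)
    qed
    also have "\<dots> \<le> B/\<rho> * 1 * (1/2)^n"
    proof -
      have "real (Suc n) \<le> 2^n"
      proof (induction n)
        case (Suc n)
        have "(1::real) \<le> 2^n" by simp
        then show ?case using Suc by simp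
      qed simp
      then have "real (Suc n) / 2^n \<le> 1" by simp
      then show ?thesis using B0 rho by (intro mult_right_mono mult_left_mono) auto
    qed
    finally show ?thesis by simp
  qed
  have gs: "summable (\<lambda>n. B/\<rho> * (1/2::real)^n)" by (intro summable_mult summable_geometric) auto
  have "norm (\<Sum>n. diffs c n * y^n) \<le> (\<Sum>n. B/\<rho> * (1/2::real)^n)"
    by (rule norm_suminf_le[OF tb gs])
  also have "\<dots> = 2*B/\<rho>" using suminf_geometric[of "1/2::real"] by (subst suminf_mult) auto
  finally show ?thesis by simp
qed

lemma ra2_rep:
  assumes an: "real_analytic2_on f S" and z: "(0,0) \<in> S"
  obtains \<rho> B F where "\<rho> > 0" "B \<ge> 0"
    "\<And>i x. \<bar>x\<bar> \<le> \<rho>/4 \<Longrightarrow> \<bar>F i x\<bar> \<le> B/\<rho>^i"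
    "\<And>i x. \<bar>x\<bar> \<le> \<rho>/4 \<Longrightarrow> \<bar>F i x - F i 0\<bar> \<le> B/\<rho>^i * \<bar>x\<bar>"
    "\<And>t x. \<bar>t\<bar> < \<rho> \<Longrightarrow> \<bar>x\<bar> \<le> \<rho>/4 \<Longrightarrow> f t x = (\<Sum>i. F i x * t^i)"
proof -
  obtain r c where r: "r > 0" and rc: "\<And>t x. \<bar>t\<bar> < r \<and> \<bar>x\<bar> < r \<Longrightarrow>
          (\<lambda>(i, j). norm (c i j * t ^ i * x ^ j)) summable_on UNIV \<and>
          ((\<lambda>(i, j). c i j * t ^ i * x ^ j) has_sum f t x) UNIV"
    using an z unfolding real_analytic2_on_def by fastforce
  define \<rho> where "\<rho> = r/2"
  have rho: "\<rho> > 0" "\<rho> < r" using r by (auto simp: \<rho>_def)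
  define S0 where "S0 = infsum (\<lambda>(i, j). norm (c i j * \<rho> ^ i * \<rho> ^ j)) UNIV"
  have sumS: "(\<lambda>(i, j). norm (c i j * \<rho> ^ i * \<rho> ^ j)) summable_on UNIV"
    using rc[of \<rho> \<rho>] rho by auto
  have cle: "\<bar>c i j\<bar> * \<rho>^i * \<rho>^j \<le> S0" for i j
  proof -
    have "sum (\<lambda>(i, j). norm (c i j * \<rho> ^ i * \<rho> ^ j)) {(i,j)} \<le> S0"
      unfolding S0_def by (rule finite_sum_le_infsum[OF sumS]) auto
    then show ?thesis using rho by (simp add: abs_mult)
  qed
  have S0: "S0 \<ge> 0" using cle[of 0 0] by (smt (verit) abs_ge_zero mult_nonneg_nonneg power_0)
  have cb: "\<bar>c i j\<bar> \<le> (S0/\<rho>^i) / \<rho>^j" for i j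
    using cle[of i j] rho by (simp add: field_simps)
  have cba: "\<bar>\<bar>c i j\<bar>\<bar> \<le> (S0/\<rho>^i) / \<rho>^j" for i j using cb by simp
  define F where "F i x = (\<Sum>j. c i j * x^j)" for i x
  define B where "B = 2*S0 + 2*S0/\<rho>"
  show ?thesis
  proof (rule that[of \<rho> B F])
    show "\<rho> > 0" "B \<ge> 0" using rho S0 by (auto simp: B_def)
    fix i and x :: real assume x: "\<bar>x\<bar> \<le> \<rho>/4"
    have "\<bar>F i x\<bar> \<le> 2 * (S0/\<rho>^i) * (\<bar>x\<bar>/\<rho>)^0"
      using ps_tail(2)[OF cb rho(1) x, of i 0] by (simp add: F_def)
    also have "\<dots> \<le> B/\<rho>^i" using rho S0 by (simp add: B_def divide_right_mono)
    finally show "\<bar>F i x\<bar> \<le> B/\<rho>^i" .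
    have "\<bar>F i x - F i 0\<bar> \<le> 2 * (S0/\<rho>^i) * (\<bar>x\<bar>/\<rho>)^1"
      using ps_tail(2)[OF cb rho(1) x, of i 1] by (simp add: F_def)
    also have "\<dots> = (2*S0/\<rho>)/\<rho>^i * \<bar>x\<bar>" by simp
    also have "\<dots> \<le> B/\<rho>^i * \<bar>x\<bar>"
      using rho S0 by (intro mult_right_mono divide_right_mono) (auto simp: B_def)
    finally show "\<bar>F i x - F i 0\<bar> \<le> B/\<rho>^i * \<bar>x\<bar>" .
  next
    fix t x :: real assume t: "\<bar>t\<bar> < \<rho>" and x: "\<bar>x\<bar> \<le> \<rho>/4"
    have xr: "\<bar>x\<bar> < r" using x rho by auto
    have hs: "((\<lambda>(i, j). c i j * t ^ i * x ^ j) has_sum f t x) UNIV" using rc[of t x] t xr rho by auto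
    have inner: "((\<lambda>j. (\<lambda>(i, j). c i j * t ^ i * x ^ j) (i, j)) has_sum (F i x * t^i)) UNIV" for i
    proof -
      have s1: "summable (\<lambda>j. c i j * x^j)" using ps_tail(1)[OF cb rho(1) x] .
      have s2: "summable (\<lambda>j. \<bar>c i j\<bar> * \<bar>x\<bar>^j)" using ps_tail(1)[OF cba rho(1), of "\<bar>x\<bar>"] x by simp
      have "(\<lambda>j. c i j * x^j * t^i) sums (F i x * t^i)"
        unfolding F_def by (intro sums_mult2 summable_sums s1)
      moreover have "summable (\<lambda>j. norm (c i j * x^j * t^i))"
        using summable_mult2[OF s2, of "\<bar>t\<bar>^i"] by (simp add: abs_mult power_abs)
      ultimately have "((\<lambda>j. c i j * x^j * t^i) has_sum (F i x * t^i)) UNIV"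
        by (intro norm_summable_imp_has_sum) auto
      then show ?thesis by (simp add: mult_ac)
    qed
    have "((\<lambda>i. F i x * t^i) has_sum f t x) UNIV"
      using has_sum_Sigma'[where A=UNIV and B="\<lambda>_. UNIV", OF _ inner] hs by simp
    then show "f t x = (\<Sum>i. F i x * t^i)"
      using has_sum_imp_sums sums_unique by blast
  qed
qed

lemma ps_facts:
  fixes F :: "nat \<Rightarrow> real" and g :: "real \<Rightarrow> real"
  assumes rho: "\<rho> > 0" and Fb: "\<And>i. \<bar>F i\<bar> \<le> B/\<rho>^i"
    and rep: "\<And>t. \<bar>t\<bar> < \<rho> \<Longrightarrow> g t = (\<Sum>i. F i * t^i)"
  shows "\<And>t. \<bar>t\<bar> \<le> \<rho>/4 \<Longrightarrow> \<bar>g t\<bar> \<le> 2*B"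
    and "\<And>t. \<bar>t\<bar> \<le> \<rho>/4 \<Longrightarrow> \<bar>g t - F 0\<bar> \<le> 2*B*\<bar>t\<bar>/\<rho>"
    and "\<And>t. \<bar>t\<bar> \<le> \<rho>/4 \<Longrightarrow> \<bar>g t - F 0 - F 1 * t\<bar> \<le> 2*B*t^2/\<rho>^2"
    and "\<And>t. \<bar>t\<bar> < \<rho> \<Longrightarrow> (g has_real_derivative (\<Sum>n. diffs F n * t^n)) (at t)"
    and "\<And>t. \<bar>t\<bar> \<le> \<rho>/4 \<Longrightarrow> \<bar>\<Sum>n. diffs F n * t^n\<bar> \<le> 2*B/\<rho>"
    and "g 0 = F 0"
    and "(\<Sum>n. diffs F n * 0^n) = F 1"
    and "((\<lambda>s. \<Sum>n. diffs F n * s^n) has_real_derivative 2*F 2) (at 0)"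
proof -
  fix t :: real assume t: "\<bar>t\<bar> \<le> \<rho>/4"
  have tr: "\<bar>t\<bar> < \<rho>" using t rho by auto
  show "\<bar>g t\<bar> \<le> 2*B" using ps_tail(2)[OF Fb rho t, of 0] rep[OF tr] by simp
  show "\<bar>g t - F 0\<bar> \<le> 2*B*\<bar>t\<bar>/\<rho>" using ps_tail(2)[OF Fb rho t, of 1] rep[OF tr] by simp
  show "\<bar>g t - F 0 - F 1 * t\<bar> \<le> 2*B*t^2/\<rho>^2"
    using ps_tail(2)[OF Fb rho t, of 2] rep[OF tr] by (simp add: numeral_2_eq_2 power_divide power2_abs)
  show "\<bar>\<Sum>n. diffs F n * t^n\<bar> \<le> 2*B/\<rho>" by (rule ps_deriv_bound[OF Fb rho t])
next
  fix t :: real assume tr: "\<bar>t\<bar> < \<rho>"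
  have d: "((\<lambda>s. \<Sum>i. F i * s^i) has_real_derivative (\<Sum>n. diffs F n * t^n)) (at t)"
    by (rule ps_deriv[OF Fb rho tr])
  show "(g has_real_derivative (\<Sum>n. diffs F n * t^n)) (at t)"
  proof (rule has_field_derivative_transform_within_open[OF d, of "{-\<rho><..<\<rho>}"])
    show "open {-\<rho><..<\<rho>}" by simp
    show "t \<in> {-\<rho><..<\<rho>}" using tr by auto
    show "\<And>z. z \<in> {-\<rho><..<\<rho>} \<Longrightarrow> (\<Sum>i. F i * z^i) = g z" using rep by auto
  qed
next
  show "g 0 = F 0" using rep[of 0] rho by simp
  show "(\<Sum>n. diffs F n * 0^n) = F 1" by (simp add: diffs_def)
  show "((\<lambda>s. \<Sum>n. diffs F n * s^n) has_real_derivative 2*F 2) (at 0)"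
    by (rule ps_deriv2[OF Fb rho])
qed



lemma root_small:
  fixes z :: complex
  assumes z: "z^3 + of_real a1*z^2 + of_real a2*z + of_real a3 = 0" and e: "\<epsilon> > 0"
    and h1: "\<bar>a1\<bar> \<le> \<epsilon>/3" and h2: "\<bar>a2\<bar> \<le> \<epsilon>^2/3" and h3: "\<bar>a3\<bar> \<le> \<epsilon>^3/3"
  shows "cmod z \<le> \<epsilon>"
proof (rule ccontr)
  assume "\<not> cmod z \<le> \<epsilon>"
  then have u: "cmod z > \<epsilon>" by simp
  define u where "u = cmod z"
  have "z^3 = - (of_real a1*z^2 + of_real a2*z + of_real a3)" using z by (simp add: algebra_simps eq_neg_iff_add_eq_0)
  then have "u^3 = cmod (- (of_real a1*z^2 + of_real a2*z + of_real a3))" by (simp only: u_def norm_power[symmetric])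
  also have "\<dots> = cmod (of_real a1*z^2 + of_real a2*z + of_real a3)" by (rule norm_minus_cancel)
  also have "\<dots> \<le> cmod (of_real a1*z^2) + cmod (of_real a2*z) + cmod (of_real a3)"
    by (smt (verit) norm_triangle_ineq)
  also have "\<dots> = \<bar>a1\<bar>*u^2 + \<bar>a2\<bar>*u + \<bar>a3\<bar>" by (simp add: u_def norm_mult norm_power)
  finally have A: "u^3 \<le> \<bar>a1\<bar>*u^2 + \<bar>a2\<bar>*u + \<bar>a3\<bar>" .
  have u0: "u > \<epsilon>" using u by (simp add: u_def)
  have "\<bar>a1\<bar>*u^2 \<le> \<epsilon>/3*u^2" by (intro mult_right_mono h1) simp
  also have "\<dots> < u/3*u^2" using u0 e by (intro mult_strict_right_mono) auto
  finally have 1: "\<bar>a1\<bar>*u^2 < u^3/3" by (simp add: power2_eq_square power3_eq_cube)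
  have "\<epsilon>^2 < u^2" using u0 e by (intro power_strict_mono) auto
  have "\<bar>a2\<bar>*u \<le> \<epsilon>^2/3*u" using u0 e by (intro mult_right_mono h2) auto
  also have "\<dots> < u^2/3*u" using \<open>\<epsilon>^2 < u^2\<close> u0 e by (intro mult_strict_right_mono) auto
  finally have 2: "\<bar>a2\<bar>*u < u^3/3" by (simp add: power2_eq_square power3_eq_cube)
  have "\<epsilon>^3 < u^3" using u0 e by (intro power_strict_mono) auto
  then have 3: "\<bar>a3\<bar> < u^3/3" using h3 by simp
  show False using A 1 2 3 by simp
qed

lemma norm3: "norm ((x::'a::real_normed_vector)+y+z) \<le> norm x + norm y + norm z"
proof -
  have "norm (x+y+z) \<le> norm (x+y) + norm z" by (rule norm_triangle_ineq)
  also have "\<dots> \<le> norm x + norm y + norm z" using norm_triangle_ineq[of x y] by simp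
  finally show ?thesis .
qed

lemma cubic_main:
  fixes a1 a2 a3 T' :: real
  assumes a3: "a3 \<ge> 0"
    and pos: "\<And>t. 0 < t \<Longrightarrow> t < T' \<Longrightarrow> t^3 + a1*t^2 + a2*t + a3 \<ge> 0"
    and T': "T' > 0"
    and h1: "\<bar>a1\<bar> \<le> (T'/4)/3" and h2: "\<bar>a2\<bar> \<le> (T'/4)^2/3" and h3: "\<bar>a3\<bar> \<le> (T'/4)^3/3"
  defines "\<psi> \<equiv> max 0 (Max (Re ` {z::complex. z^3 + of_real a1*z^2 + of_real a2*z + of_real a3 = 0}))"
  shows "\<exists>M. 0 \<le> M \<and> M \<le> T'/4 \<and> \<bar>a1\<bar> \<le> 3*M \<and> \<bar>a2\<bar> \<le> 3*M^2 \<and> \<bar>a3\<bar> \<le> M^3 \<and> 0 \<le> \<psi> \<and> \<psi> \<le> T'/4 \<and>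
     (\<forall>t \<phi>. 0 \<le> t \<and> t < T' \<and> ((t \<le> \<psi>/2 \<and> \<phi> = t) \<or> (\<psi>/2 \<le> t \<and> \<phi> = t - \<psi>)) \<longrightarrow>
        \<bar>\<phi>\<bar> \<le> t \<and> 0 \<le> t^3 + a1*t^2 + a2*t + a3 \<and>
        \<bar>\<phi>\<bar> * \<bar>3*t^2 + 2*a1*t + a2\<bar> \<le> 3 * (t^3 + a1*t^2 + a2*t + a3) \<and>
        \<phi>^2 * (t + M) \<le> 3 * (t^3 + a1*t^2 + a2*t + a3))"
proof -
  define cub where "cub t = t^3 + a1*t^2 + a2*t + a3" for t
  define \<epsilon> where "\<epsilon> = T'/4"
  have e: "\<epsilon> > 0" using T' by (simp add: \<epsilon>_def)
  define L where "L = 1 + \<bar>a1\<bar> + \<bar>a2\<bar> + \<bar>a3\<bar>"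
  have L1: "L \<ge> 1" by (simp add: L_def)
  have "cub (-L) \<le> - (L^3) + \<bar>a1\<bar>*L^2 + \<bar>a2\<bar>*L + \<bar>a3\<bar>"
  proof -
    have "a1*L^2 \<le> \<bar>a1\<bar>*L^2" by (rule mult_right_mono) auto
    moreover have "-a2*L \<le> \<bar>a2\<bar>*L" using L1 by (intro mult_right_mono) auto
    moreover have "a3 \<le> \<bar>a3\<bar>" by simp
    moreover have "cub (-L) = - (L^3) + a1*L^2 + (-a2)*L + a3" by (simp add: cub_def power2_eq_square power3_eq_cube)
    ultimately show ?thesis by linarith
  qed
  also have "\<dots> \<le> - (L^3) + \<bar>a1\<bar>*L^2 + \<bar>a2\<bar>*L^2 + \<bar>a3\<bar>*L^2"
  proof -
    have "1*L \<le> L*L" "1*1 \<le> L*L" using L1 by (intro mult_right_mono mult_mono; simp)+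
    then have "L \<le> L^2" "1 \<le> L^2" by (simp_all add: power2_eq_square)
    then have "\<bar>a2\<bar>*L \<le> \<bar>a2\<bar>*L^2" "\<bar>a3\<bar>*1 \<le> \<bar>a3\<bar>*L^2" by (intro mult_left_mono; simp)+
    then show ?thesis by simp
  qed
  also have "\<dots> = - (L^2)" by (simp add: L_def power2_eq_square power3_eq_cube algebra_simps)
  also have "\<dots> \<le> 0" by simp
  finally have cL: "cub (-L) \<le> 0" .
  have c0: "0 \<le> cub 0" using a3 by (simp add: cub_def)
  have cont: "continuous_on {-L..0} cub" unfolding cub_def by (intro continuous_intros)
  obtain r where r: "-L \<le> r" "r \<le> 0" "cub r = 0"
    using IVT'[of cub "-L" 0 0, OF cL c0 _ cont] L1 by auto
  define p where "p = a1 + r"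
  define q where "q = a2 + r*p"
  have a3e: "a3 = - r*q" using r(3) by (simp add: cub_def q_def p_def power2_eq_square power3_eq_cube algebra_simps)
  have a1e: "a1 = p - r" and a2e: "a2 = q - r*p" by (simp_all add: p_def q_def)
  define d where "d = p^2 - 4*q"
  define w where "w = csqrt (of_real d)"
  have w2: "w^2 = of_real d" by (simp add: w_def)
  define \<nu>2 where "\<nu>2 = (- of_real p + w)/2"
  define \<nu>3 where "\<nu>3 = (- of_real p - w)/2"
  have sum23: "\<nu>2 + \<nu>3 = - of_real p" by (simp add: \<nu>2_def \<nu>3_def field_simps)
  have prod23: "\<nu>2 * \<nu>3 = of_real q"
  proof -
    have "\<nu>2 * \<nu>3 = (of_real p ^2 - w^2)/4" by (simp add: \<nu>2_def \<nu>3_def field_simps power2_eq_square)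
    also have "\<dots> = of_real q" by (simp add: w2 d_def)
    finally show ?thesis .
  qed
  have fact: "z^3 + of_real a1*z^2 + of_real a2*z + of_real a3 = (z - of_real r)*(z - \<nu>2)*(z - \<nu>3)" for z :: complex
  proof -
    have "(z - of_real r)*(z - \<nu>2)*(z - \<nu>3) = (z - of_real r)*(z^2 - (\<nu>2+\<nu>3)*z + \<nu>2*\<nu>3)"
      by (simp add: algebra_simps power2_eq_square)
    also have "\<dots> = (z - of_real r)*(z^2 + of_real p*z + of_real q)" by (simp add: sum23 prod23)
    also have "\<dots> = z^3 + of_real a1*z^2 + of_real a2*z + of_real a3"
      by (simp add: a1e a2e a3e algebra_simps power2_eq_square power3_eq_cube)
    finally show ?thesis by simp
  qed
  have roots: "{z::complex. z^3 + of_real a1*z^2 + of_real a2*z + of_real a3 = 0} = {of_real r, \<nu>2, \<nu>3}"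
    by (auto simp: fact)
  have Rew: "Re w \<ge> 0" by (simp add: w_def)
  have Re2: "Re \<nu>2 = (-p + Re w)/2" and Re3: "Re \<nu>3 = (-p - Re w)/2" by (simp_all add: \<nu>2_def \<nu>3_def)
  have psi: "\<psi> = max 0 (Re \<nu>2)"
    unfolding \<psi>_def roots using r(2) Rew Re2 Re3 by (simp add: max_def)
  have psi0: "0 \<le> \<psi>" by (simp add: psi)
  have small: "cmod z \<le> \<epsilon>" if "z \<in> {of_real r, \<nu>2, \<nu>3}" for z
    by (rule root_small[OF _ e]) (use that fact h1 h2 h3 in \<open>auto simp: \<epsilon>_def\<close>)
  have psiT: "\<psi> \<le> T'/4"
    using small[of \<nu>2] complex_Re_le_cmod[of \<nu>2] e by (auto simp: psi \<epsilon>_def)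
  have P: "Re z \<le> 0 \<or> Re z = \<psi>" if "z \<in> {of_real r, \<nu>2, \<nu>3}" for z
  proof -
    have "Re \<nu>3 \<le> 0 \<or> Re \<nu>3 = \<psi>"
    proof (cases "d < 0")
      case True
      then have "Re w = 0" by (simp add: w_def)
      then show ?thesis using Re2 Re3 psi by auto
    next
      case False
      then have wr: "w = of_real (sqrt d)" by (simp add: w_def csqrt_of_real)
      define s1 where "s1 = (-p - sqrt d)/2"
      define s2 where "s2 = (-p + sqrt d)/2"
      have n2: "\<nu>2 = of_real s2" and n3: "\<nu>3 = of_real s1" by (simp_all add: \<nu>2_def \<nu>3_def s1_def s2_def wr)
      have s12: "s1 \<le> s2" using False by (simp add: s1_def s2_def)
      show ?thesis
      proof (rule ccontr)
        assume "\<not> ?thesis"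
        then have s1p: "s1 > 0" and ne: "s1 \<noteq> \<psi>" by (auto simp: n3)
        then have "\<psi> = s2" using s12 by (simp add: psi n2)
        then have lt: "s1 < s2" using ne s12 by auto
        define m where "m = (s1+s2)/2"
        have m0: "0 < m" "m < T'"
          using s1p lt small[of \<nu>2] e by (auto simp: m_def n2 \<epsilon>_def)
        have "of_real (cub m) = (of_real m - of_real r)*(of_real m - \<nu>2)*(of_real m - \<nu>3)"
          using fact[of "of_real m"] by (simp add: cub_def)
        then have "cub m = (m - r)*(m - s2)*(m - s1)" by (simp add: n2 n3 flip: of_real_diff of_real_mult)
        moreover have "(m - r)*(m - s2)*(m - s1) < 0"
        proof -
          have "(m - r) > 0" "m - s2 < 0" "m - s1 > 0" using r(2) m0 lt by (auto simp: m_def)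
          then show ?thesis by (simp add: mult_pos_neg mult_neg_pos)
        qed
        ultimately show False using pos[OF m0] by (simp add: cub_def)
      qed
    qed
    moreover have "Re \<nu>2 \<le> 0 \<or> Re \<nu>2 = \<psi>" by (auto simp: psi)
    ultimately show ?thesis using that r(2) by auto
  qed
  define M where "M = max \<bar>r\<bar> (max (cmod \<nu>2) (cmod \<nu>3))"
  have M0: "0 \<le> M" by (simp add: M_def)
  have MT: "M \<le> T'/4" using small[of "of_real r"] small[of \<nu>2] small[of \<nu>3] by (auto simp: M_def \<epsilon>_def)
  have cr: "cmod (of_real r) \<le> M" "cmod \<nu>2 \<le> M" "cmod \<nu>3 \<le> M" by (auto simp: M_def)
  have pe: "(of_real p::complex) = - (\<nu>2 + \<nu>3)" using arg_cong[OF sum23, of uminus] by simp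
  have va1: "of_real a1 = - (of_real r + \<nu>2 + \<nu>3)" by (simp add: a1e pe algebra_simps)
  have va2: "of_real a2 = of_real r * \<nu>2 + of_real r * \<nu>3 + \<nu>2 * \<nu>3"
    by (simp add: a2e pe prod23[symmetric] algebra_simps)
  have va3: "of_real a3 = - (of_real r * \<nu>2 * \<nu>3)" using prod23 by (simp add: a3e)
  have b1: "\<bar>a1\<bar> \<le> 3*M"
  proof -
    have "\<bar>a1\<bar> = cmod (of_real r + \<nu>2 + \<nu>3)" using va1 by (metis norm_minus_cancel norm_of_real)
    also have "\<dots> \<le> cmod (of_real r) + cmod \<nu>2 + cmod \<nu>3" by (rule norm3)
    finally show ?thesis using cr by simp
  qed
  have b2: "\<bar>a2\<bar> \<le> 3*M^2"
  proof -
    have "\<bar>a2\<bar> = cmod (of_real r * \<nu>2 + of_real r * \<nu>3 + \<nu>2 * \<nu>3)" using va2 by (metis norm_of_real)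
    also have "\<dots> \<le> cmod (of_real r) * cmod \<nu>2 + cmod (of_real r) * cmod \<nu>3 + cmod \<nu>2 * cmod \<nu>3"
      using norm3[of "of_real r * \<nu>2" "of_real r * \<nu>3" "\<nu>2 * \<nu>3"] by (simp only: norm_mult)
    also have "\<dots> \<le> M*M + M*M + M*M" using cr by (intro add_mono mult_mono) auto
    finally show ?thesis by (simp add: power2_eq_square)
  qed
  have b3: "\<bar>a3\<bar> \<le> M^3"
  proof -
    have "\<bar>a3\<bar> = cmod (of_real r) * cmod \<nu>2 * cmod \<nu>3" using va3 by (metis norm_minus_cancel norm_mult norm_of_real)
    also have "\<dots> \<le> M*M*M" using cr by (intro mult_mono) auto
    finally show ?thesis by (simp add: power3_eq_cube)
  qed
  have main: "\<bar>\<phi>\<bar> \<le> t \<and> 0 \<le> cub t \<and> \<bar>\<phi>\<bar> * \<bar>3*t^2 + 2*a1*t + a2\<bar> \<le> 3 * cub t \<and> \<phi>^2 * (t + M) \<le> 3 * cub t"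
    if t: "0 \<le> t" "t < T'" and reg: "(t \<le> \<psi>/2 \<and> \<phi> = t) \<or> (\<psi>/2 \<le> t \<and> \<phi> = t - \<psi>)" for t \<phi>
  proof -
    have phit: "\<bar>\<phi>\<bar> \<le> t" using reg psi0 t by auto
    have phiz: "\<bar>\<phi>\<bar> \<le> cmod (of_real t - z)" if z: "z \<in> {of_real r, \<nu>2, \<nu>3}" for z
    proof -
      have "\<bar>t - Re z\<bar> \<le> cmod (of_real t - z)" using abs_Re_le_cmod[of "of_real t - z"] by simp
      moreover have "\<bar>\<phi>\<bar> \<le> \<bar>t - Re z\<bar>" using P[OF z] reg psi0 t by auto
      ultimately show ?thesis by simp
    qed
    define m1 where "m1 = cmod (of_real t - of_real r)"
    define m2 where "m2 = cmod (of_real t - \<nu>2)"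
    define m3 where "m3 = cmod (of_real t - \<nu>3)"
    have pm: "\<bar>\<phi>\<bar> \<le> m1" "\<bar>\<phi>\<bar> \<le> m2" "\<bar>\<phi>\<bar> \<le> m3" using phiz by (auto simp: m1_def m2_def m3_def)
    have mnn: "0 \<le> m1" "0 \<le> m2" "0 \<le> m3" by (auto simp: m1_def m2_def m3_def)
    have cub0: "0 \<le> cub t"
    proof (cases "t = 0")
      case True then show ?thesis using c0 by simp
    next
      case False then show ?thesis using pos[of t] t by (simp add: cub_def)
    qed
    have cubc: "of_real (cub t) = (of_real t - of_real r)*(of_real t - \<nu>2)*(of_real t - \<nu>3)"
      using fact[of "of_real t"] by (simp add: cub_def)
    have cubm: "cub t = m1*m2*m3"
    proof -
      have "\<bar>cub t\<bar> = m1*m2*m3" using arg_cong[OF cubc, of cmod] by (simp add: m1_def m2_def m3_def norm_mult)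
      then show ?thesis using cub0 by simp
    qed
    have dc: "of_real (3*t^2 + 2*a1*t + a2) = (of_real t - \<nu>2)*(of_real t - \<nu>3) + (of_real t - of_real r)*(of_real t - \<nu>3) + (of_real t - of_real r)*(of_real t - \<nu>2)"
    proof -
      have "of_real (3*t^2 + 2*a1*t + a2) = 3*(of_real t)^2 + 2* of_real a1* of_real t + (of_real a2::complex)" by simp
      also have "\<dots> = (of_real t - \<nu>2)*(of_real t - \<nu>3) + (of_real t - of_real r)*(of_real t - \<nu>3) + (of_real t - of_real r)*(of_real t - \<nu>2)"
        using va1 va2 by (simp only:) (simp add: algebra_simps power2_eq_square)
      finally show ?thesis .
    qed
    have dle: "\<bar>3*t^2 + 2*a1*t + a2\<bar> \<le> m2*m3 + m1*m3 + m1*m2"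
    proof -
      have "\<bar>3*t^2 + 2*a1*t + a2\<bar> = cmod ((of_real t - \<nu>2)*(of_real t - \<nu>3) + (of_real t - of_real r)*(of_real t - \<nu>3) + (of_real t - of_real r)*(of_real t - \<nu>2))"
        by (metis dc norm_of_real)
      also have "\<dots> \<le> m2*m3 + m1*m3 + m1*m2" unfolding m1_def m2_def m3_def
        using norm3[of "(of_real t - \<nu>2)*(of_real t - \<nu>3)" "(of_real t - of_real r)*(of_real t - \<nu>3)" "(of_real t - of_real r)*(of_real t - \<nu>2)"]
        by (simp only: norm_mult)
      finally show ?thesis .
    qed
    have k1: "\<bar>\<phi>\<bar>*(m2*m3) \<le> m1*m2*m3" using pm mnn by (simp add: mult_right_mono mult.assoc)
    have k2: "\<bar>\<phi>\<bar>*(m1*m3) \<le> m1*m2*m3"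
      using mult_right_mono[OF pm(2), of "m1*m3"] mnn by (simp add: mult_ac)
    have k3: "\<bar>\<phi>\<bar>*(m1*m2) \<le> m1*m2*m3"
      using mult_right_mono[OF pm(3), of "m1*m2"] mnn by (simp add: mult_ac)
    have D: "\<bar>\<phi>\<bar> * \<bar>3*t^2 + 2*a1*t + a2\<bar> \<le> 3 * cub t"
    proof -
      have "\<bar>\<phi>\<bar> * \<bar>3*t^2 + 2*a1*t + a2\<bar> \<le> \<bar>\<phi>\<bar> * (m2*m3 + m1*m3 + m1*m2)"
        by (rule mult_left_mono[OF dle]) simp
      also have "\<dots> \<le> 3*(m1*m2*m3)" using k1 k2 k3 by (simp add: distrib_left)
      finally show ?thesis by (simp add: cubm)
    qed
    have p2: "\<phi>^2 \<le> m2*m3" "\<phi>^2 \<le> m1*m3" "\<phi>^2 \<le> m1*m2"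
    proof -
      have "\<bar>\<phi>\<bar>*\<bar>\<phi>\<bar> \<le> m2*m3" "\<bar>\<phi>\<bar>*\<bar>\<phi>\<bar> \<le> m1*m3" "\<bar>\<phi>\<bar>*\<bar>\<phi>\<bar> \<le> m1*m2"
        using pm mnn by (intro mult_mono; auto)+
      then show "\<phi>^2 \<le> m2*m3" "\<phi>^2 \<le> m1*m3" "\<phi>^2 \<le> m1*m2"
        by (simp_all add: power2_eq_square abs_mult_self_eq)
    qed
    have q1: "\<phi>^2*m1 \<le> m1*m2*m3" using mult_right_mono[OF p2(1) mnn(1)] by (simp add: mult_ac)
    have q2: "\<phi>^2*m2 \<le> m1*m2*m3" using mult_right_mono[OF p2(2) mnn(2)] by (simp add: mult_ac)
    have q3: "\<phi>^2*m3 \<le> m1*m2*m3" using mult_right_mono[OF p2(3) mnn(3)] by (simp add: mult_ac)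
    have m1t: "t \<le> m1" using r(2) t by (simp add: m1_def flip: of_real_diff)
    have mM: "M - t \<le> max m1 (max m2 m3)"
    proof -
      have "cmod z - t \<le> cmod (of_real t - z)" for z :: complex
        using norm_triangle_ineq2[of z "of_real t"] t(1) by (simp add: norm_minus_commute)
      then have "\<bar>r\<bar> - t \<le> m1" "cmod \<nu>2 - t \<le> m2" "cmod \<nu>3 - t \<le> m3"
        unfolding m1_def m2_def m3_def by (metis norm_of_real)+
      then show ?thesis unfolding M_def by linarith
    qed
    have tM: "t + M \<le> 3 * max m1 (max m2 m3)" using m1t mM t M0 by linarith
    have "\<phi>^2 * (t + M) \<le> \<phi>^2 * (3 * max m1 (max m2 m3))" by (rule mult_left_mono[OF tM]) simp
    also have "\<dots> \<le> 3*(m1*m2*m3)" using q1 q2 q3 by (auto simp: max_def)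
    finally have E: "\<phi>^2 * (t + M) \<le> 3 * cub t" by (simp add: cubm)
    show ?thesis using phit cub0 D E by simp
  qed
  show ?thesis
    apply (rule exI[of _ M])
    using M0 MT b1 b2 b3 psi0 psiT main unfolding cub_def by blast
qed



lemma crux:
  fixes u A1 A2 B0 B1 B2 D0 D1 D2 M K c1 c2 \<epsilon> \<eta> L :: real
  assumes i: "27*B0^2 = 4*u^3 - D0"
    and ii: "54*B0*B1 = 12*u^2*A1 - D1"
    and iii: "27*B1^2 = 12*u*A1^2 + 12*u^2*A2 - 54*B0*B2 - D2"
    and u0: "u \<ge> 0" and c1: "c1 > 0" "c1 \<le> A1" "A1 \<le> c2"
    and K: "K \<ge> 0" "\<bar>A2\<bar> \<le> K" "\<bar>B2\<bar> \<le> K"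
    and M: "M \<ge> 0" "\<bar>D0\<bar> \<le> K*M^3" "\<bar>D1\<bar> \<le> K*M^2" "\<bar>D2\<bar> \<le> K*M"
    and he: "0 \<le> \<epsilon>" "\<epsilon> \<le> 1" "864*K*\<epsilon> \<le> 7*c1^2"
    and hn: "\<eta> \<le> 1" "192*K*\<eta> \<le> 7*c1^2" "(4+K)*\<eta> \<le> 27*\<epsilon>^2"
    and hL: "L \<ge> 1" "24*c2*K \<le> 7*c1^2*L" "K^2 \<le> 7*c1^2*L" "16*K \<le> 7*c1^2*L" "4*K*(12*c2^2+67*K) \<le> 7*c1^2*L"
    and uh: "u \<le> \<eta>"
  shows "u \<le> L*M"
proof (rule ccontr)
  assume "\<not> u \<le> L*M"
  then have uLM: "L*M < u" by simp
  define m where "m = u/L"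
  have L0: "L > 0" using hL by simp
  have um: "u = L*m" using L0 by (simp add: m_def)
  have Mm: "M \<le> m" using uLM L0 by (simp add: m_def field_simps)
  have "0 \<le> L*M" using L0 M by simp
  then have "u > 0" using uLM by simp
  then have m0: "m > 0" using L0 by (simp add: m_def)
  have u1: "u > 0" using um m0 L0 by simp
  have mu: "m \<le> u" using um m0 hL by (simp add: mult_le_cancel_right1)
  have ule1: "u \<le> 1" using uh hn by simp
  have c2: "\<bar>A1\<bar> \<le> c2" "c2 > 0" using c1 by auto
  have D0: "\<bar>D0\<bar> \<le> K*m^3" using M(2) power_mono[OF Mm M(1), of 3] K(1) by (meson mult_left_mono order_trans)
  have D1: "\<bar>D1\<bar> \<le> K*m^2" using M(3) power_mono[OF Mm M(1), of 2] K(1) by (meson mult_left_mono order_trans)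
  have D2: "\<bar>D2\<bar> \<le> K*m" using M(4) Mm K(1) by (meson mult_left_mono order_trans)
  have "27*B0^2 \<le> 4*u^3 + K*m^3" using i D0 by linarith
  also have "\<dots> \<le> 4*u^3 + K*u^3" using power_mono[OF mu, of 3] m0 K(1) by (simp add: mult_left_mono)
  also have "\<dots> = (4+K)*u*u^2" by (simp add: algebra_simps power2_eq_square power3_eq_cube)
  also have "\<dots> \<le> (4+K)*\<eta>*u^2" using uh K(1) by (intro mult_right_mono mult_left_mono) auto
  also have "\<dots> \<le> 27*\<epsilon>^2*u^2" using hn(3) by (intro mult_right_mono) auto
  finally have "B0^2 \<le> (\<epsilon>*u)^2" by (simp add: power_mult_distrib)
  then have B0: "\<bar>B0\<bar> \<le> \<epsilon>*u" using he u0 by (metis abs_le_square_iff abs_of_nonneg mult_nonneg_nonneg)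
  define X where "X = 12*u^2*A2 - 54*B0*B2 - D2"
  have sq: "(12*u^2*A1 - D1)^2 = 4*(4*u^3 - D0)*(12*u*A1^2 + X)"
  proof -
    have iii': "27*B1^2 = 12*u*A1^2 + X" using iii by (simp add: X_def)
    show ?thesis using i ii iii' by algebra
  qed
  have idt: "48*u^4*A1^2 = -24*u^2*A1*D1 + D1^2 - 16*u^3*X + 4*D0*(12*u*A1^2 + X)"
    using sq by algebra
  have X: "\<bar>X\<bar> \<le> 12*u^2*K + 54*(\<epsilon>*u)*K + K*m"
  proof -
    have "\<bar>X\<bar> \<le> \<bar>12*u^2*A2\<bar> + \<bar>54*B0*B2\<bar> + \<bar>D2\<bar>" unfolding X_def by linarith
    moreover have "\<bar>12*u^2*A2\<bar> \<le> 12*u^2*K" using K by (simp add: abs_mult mult_left_mono)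
    moreover have "\<bar>54*B0*B2\<bar> \<le> 54*(\<epsilon>*u)*K" using B0 K by (simp add: abs_mult mult_mono)
    ultimately show ?thesis using D2 by linarith
  qed
  let ?k = "7*c1^2"
  have k0: "?k \<ge> 0" by simp
  have T1: "\<bar>-24*u^2*A1*D1\<bar> \<le> ?k*u^4"
  proof -
    have "\<bar>-24*u^2*A1*D1\<bar> = 24*u^2*\<bar>A1\<bar>*\<bar>D1\<bar>" by (simp add: abs_mult)
    also have "\<dots> \<le> 24*u^2*c2*(K*m^2)" using c2 D1 by (intro mult_mono mult_left_mono) auto
    also have "\<dots> = (24*c2*K)*(m^2*u^2)" by (simp add: algebra_simps)
    also have "\<dots> \<le> (?k*L)*(m^2*u^2)" using hL(2) by (intro mult_right_mono) auto
    also have "\<dots> \<le> (?k*L*L)*(m^2*u^2)" using hL(1) by (intro mult_right_mono mult_left_mono) (auto simp: mult_le_cancel_left1)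
    also have "\<dots> = ?k*u^4" by (simp add: um algebra_simps power2_eq_square power4_eq_xxxx)
    finally show ?thesis .
  qed
  have T2: "D1^2 \<le> ?k*u^4"
  proof -
    have "D1^2 \<le> (K*m^2)^2" using D1 by (metis abs_ge_zero power2_abs power_mono)
    also have "\<dots> = K^2*m^4" by (simp add: power_mult_distrib flip: power_mult)
    also have "\<dots> \<le> (?k*L)*m^4" using hL(3) by (intro mult_right_mono) auto
    also have "\<dots> \<le> (?k*L^4)*m^4"
    proof -
      have "1 \<le> L^3" using hL(1) by simp
      then have "L*1 \<le> L*L^3" using hL(1) by (intro mult_left_mono) auto
      then have "L \<le> L^4" by (simp add: power_Suc[symmetric] del: power_Suc)
      then show ?thesis by (intro mult_right_mono mult_left_mono) auto
    qed
    also have "\<dots> = ?k*u^4" by (simp add: um power_mult_distrib)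
    finally show ?thesis .
  qed
  have T3: "\<bar>16*u^3*X\<bar> \<le> 3*?k*u^4"
  proof -
    have "\<bar>16*u^3*X\<bar> = 16*u^3*\<bar>X\<bar>" using u0 by (simp add: abs_mult)
    also have "\<dots> \<le> 16*u^3*(12*u^2*K + 54*(\<epsilon>*u)*K + K*m)" using X u0 by (intro mult_left_mono) auto
    also have "\<dots> = (192*K*u)*u^4 + (864*K*\<epsilon>)*u^4 + 16*K*(u^3*m)" by (simp add: algebra_simps power2_eq_square power3_eq_cube power4_eq_xxxx)
    also have "\<dots> \<le> ?k*u^4 + ?k*u^4 + ?k*u^4"
    proof (intro add_mono)
      have "192*K*u \<le> 192*K*\<eta>" using uh K by (intro mult_left_mono) auto
      then show "(192*K*u)*u^4 \<le> ?k*u^4" using hn(2) by (intro mult_right_mono) auto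
      show "(864*K*\<epsilon>)*u^4 \<le> ?k*u^4" using he by (intro mult_right_mono) auto
      have "16*K*(u^3*m) \<le> (?k*L)*(u^3*m)" using hL(4) m0 u0 by (intro mult_right_mono) auto
      also have "\<dots> = ?k*u^4" by (simp add: um algebra_simps power3_eq_cube power4_eq_xxxx)
      finally show "16*K*(u^3*m) \<le> ?k*u^4" .
    qed
    finally show ?thesis by simp
  qed
  have T4: "\<bar>4*D0*(12*u*A1^2 + X)\<bar> \<le> ?k*u^4"
  proof -
    have A1sq: "A1^2 \<le> c2^2" using c2 by (metis abs_ge_zero power2_abs power_mono)
    have "\<bar>12*u*A1^2 + X\<bar> \<le> 12*u*c2^2 + (12*u^2*K + 54*(\<epsilon>*u)*K + K*m)"
    proof -
      have "\<bar>12*u*A1^2\<bar> \<le> 12*u*c2^2" using A1sq u0 by (simp add: abs_mult mult_left_mono)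
      then show ?thesis using X by linarith
    qed
    also have "\<dots> \<le> u*(12*c2^2 + 12*K + 54*K + K)"
    proof -
      have "u*u \<le> u*1" using u0 ule1 by (intro mult_left_mono) auto
      then have "u^2*K \<le> u*K" using K by (intro mult_right_mono) (auto simp: power2_eq_square)
      moreover have "\<epsilon>*u*K \<le> u*K" using he u0 K by (simp add: mult_left_le_one_le mult_right_mono)
      moreover have "K*m \<le> K*u" using mu K by (simp add: mult_left_mono)
      ultimately show ?thesis by (simp add: algebra_simps)
    qed
    finally have Y: "\<bar>12*u*A1^2 + X\<bar> \<le> u*(12*c2^2 + 67*K)" by (simp add: add.commute)
    have "\<bar>4*D0*(12*u*A1^2 + X)\<bar> = 4*\<bar>D0\<bar>*\<bar>12*u*A1^2 + X\<bar>" by (simp add: abs_mult)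
    also have "\<dots> \<le> 4*(K*m^3)*(u*(12*c2^2 + 67*K))" using D0 Y by (intro mult_mono mult_left_mono) auto
    also have "\<dots> = (4*K*(12*c2^2 + 67*K))*(m^3*u)" by (simp add: algebra_simps)
    also have "\<dots> \<le> (?k*L)*(m^3*u)" using hL(5) m0 u0 by (intro mult_right_mono) auto
    also have "\<dots> \<le> (?k*L^3)*(m^3*u)"
    proof -
      have "1 \<le> L^2" using hL(1) by simp
      then have "L*1 \<le> L*L^2" using hL(1) by (intro mult_left_mono) auto
      then have "L \<le> L^3" by (simp add: power_Suc[symmetric] del: power_Suc)
      then show ?thesis using m0 u0 by (intro mult_right_mono mult_left_mono) auto
    qed
    also have "\<dots> = ?k*u^4" by (simp add: um algebra_simps power3_eq_cube power4_eq_xxxx)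
    finally show ?thesis .
  qed
  have "48*u^4*A1^2 \<le> 6*?k*u^4" using idt T1 T2 T3 T4 by linarith
  then have "48*(u^4*A1^2) \<le> 42*(u^4*c1^2)" by (simp add: mult_ac)
  moreover have "48*(u^4*c1^2) \<le> 48*(u^4*A1^2)"
  proof -
    have "c1^2 \<le> A1^2" using c1 by (intro power_mono) auto
    then show ?thesis using u0 by (intro mult_left_mono) auto
  qed
  moreover have "0 < u^4*c1^2" using u1 c1 by simp
  ultimately show False by linarith
qed
lemma coeff_ids:
  fixes ga gb ge da db de :: "real \<Rightarrow> real"
  assumes h: "h > 0"
    and G0: "\<And>s. \<bar>s\<bar> < h \<Longrightarrow> 4*ga s^3 - 27*gb s^2 = ge s * (s^3 + a1 * s^2 + a2 * s + a3)"
    and dA: "\<And>s. \<bar>s\<bar> < h \<Longrightarrow> (ga has_real_derivative da s) (at s)"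
    and dB: "\<And>s. \<bar>s\<bar> < h \<Longrightarrow> (gb has_real_derivative db s) (at s)"
    and dE: "\<And>s. \<bar>s\<bar> < h \<Longrightarrow> (ge has_real_derivative de s) (at s)"
    and ddA: "(da has_real_derivative 2*A2) (at 0)"
    and ddB: "(db has_real_derivative 2*B2) (at 0)"
    and ddE: "(de has_real_derivative 2*E2) (at 0)"
    and v: "ga 0 = A0" "da 0 = A1" "gb 0 = B0" "db 0 = B1" "ge 0 = E0" "de 0 = E1"
  shows "27*B0^2 = 4*A0^3 - E0*a3"
    and "54*B0*B1 = 12*A0^2*A1 - (E0*a2 + E1*a3)"
    and "27*B1^2 = 12*A0*A1^2 + 12*A0^2*A2 - 54*B0*B2 - (E0*a1 + E1*a2 + E2*a3)"
proof -
  define G where "G s = 27*(gb s*gb s) - 4*(ga s*ga s*ga s) + ge s * (s* s* s + a1*(s* s) + a2 * s + a3)" for s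
  define G' where "G' s = 54*(gb s*db s) - 12*(ga s*ga s*da s) + de s * (s* s* s + a1*(s* s) + a2* s + a3)
      + ge s * (3*(s* s) + 2*a1* s + a2)" for s
  have Gz: "G s = 0" if "\<bar>s\<bar> < h" for s
    using G0[OF that] by (simp add: G_def power2_eq_square power3_eq_cube algebra_simps)
  have zero_deriv: "(f has_real_derivative 0) (at s)" if "\<And>z. \<bar>z\<bar> < h \<Longrightarrow> f z = 0" "\<bar>s\<bar> < h" for f s
  proof (rule has_field_derivative_transform_within_open[of "\<lambda>_. 0" 0 s "{-h<..<h}"])
    show "((\<lambda>_. 0) has_real_derivative 0) (at s)" by simp
  qed (use that in auto)
  have DG: "(G has_real_derivative G' s) (at s)" if s: "\<bar>s\<bar> < h" for s
    unfolding G_def G'_def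
    by (rule derivative_eq_intros dA[OF s] dB[OF s] dE[OF s] refl | simp add: algebra_simps)+
  have G'z: "G' s = 0" if s: "\<bar>s\<bar> < h" for s
    using DERIV_unique[OF DG[OF s] zero_deriv[of G s]] Gz s by auto
  have h0: "\<bar>0::real\<bar> < h" using h by simp
  have DG': "(G' has_real_derivative
      (54*(db 0*db 0 + gb 0*(2*B2)) - 12*((da 0*ga 0 + ga 0*da 0)*da 0 + ga 0*ga 0*(2*A2))
       + (2*E2*a3 + de 0*a2) + (de 0*a2 + ge 0*(2*a1)))) (at 0)"
    unfolding G'_def
    by (rule derivative_eq_intros dA[OF h0] dB[OF h0] dE[OF h0] ddA ddB ddE refl | simp add: algebra_simps)+
  have eq3: "54*(db 0*db 0 + gb 0*(2*B2)) - 12*((da 0*ga 0 + ga 0*da 0)*da 0 + ga 0*ga 0*(2*A2))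
       + (2*E2*a3 + de 0*a2) + (de 0*a2 + ge 0*(2*a1)) = 0"
    using DERIV_unique[OF DG' zero_deriv[of G' 0]] G'z h0 by auto
  have eq2: "G' 0 = 0" using G'z h0 by auto
  have eq1: "G 0 = 0" using Gz h0 by auto
  show "27*B0^2 = 4*A0^3 - E0*a3" using eq1 v by (simp add: G_def power2_eq_square power3_eq_cube)
  show "54*B0*B1 = 12*A0^2*A1 - (E0*a2 + E1*a3)" using eq2 v by (simp add: G'_def power2_eq_square algebra_simps)
  show "27*B1^2 = 12*A0*A1^2 + 12*A0^2*A2 - 54*B0*B2 - (E0*a1 + E1*a2 + E2*a3)"
    using eq3 v by (simp add: power2_eq_square algebra_simps)
qed

lemma open_box:
  assumes "open V" "((0::real),(0::real)) \<in> V"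
  shows "\<exists>e>0. \<forall>s x. \<bar>s\<bar> < e \<longrightarrow> \<bar>x\<bar> < e \<longrightarrow> (s,x) \<in> V"
proof -
  obtain e where e: "e > 0" "\<And>y. dist y (0,0) < e \<Longrightarrow> y \<in> V" using assms unfolding open_dist by blast
  show ?thesis
  proof (intro exI[of _ "e/2"] conjI allI impI)
    fix s x :: real assume "\<bar>s\<bar> < e/2" "\<bar>x\<bar> < e/2"
    then have "dist (s,x) (0,0) < e"
      using sqrt_sum_squares_le_sum_abs[of s x] by (simp add: dist_Pair_Pair dist_real_def)
    then show "(s,x) \<in> V" using e by blast
  qed (use e in auto)
qed

lemma open_int:
  assumes "open U" "(0::real) \<in> U"
  shows "\<exists>e>0. \<forall>x. \<bar>x\<bar> < e \<longrightarrow> x \<in> U"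
  using assms unfolding open_dist by (metis dist_real_def diff_zero)

lemma ra1_lip:
  assumes an: "real_analytic1_on f N" and z: "0 \<in> N"
  shows "\<exists>K \<rho>. \<rho> > 0 \<and> K \<ge> 0 \<and> (\<forall>x. \<bar>x\<bar> \<le> \<rho> \<longrightarrow> \<bar>f x - f 0\<bar> \<le> K*\<bar>x\<bar>)"
proof -
  obtain r c where r: "r > 0" and rc: "\<And>x. \<bar>x\<bar> < r \<Longrightarrow>
          (\<lambda>i. norm (c i * x ^ i)) summable_on UNIV \<and> ((\<lambda>i. c i * x ^ i) has_sum f x) UNIV"
    using an z unfolding real_analytic1_on_def by fastforce
  define \<rho> where "\<rho> = r/2"
  have rho: "\<rho> > 0" "\<rho> < r" using r by (auto simp: \<rho>_def)
  define S where "S = infsum (\<lambda>i. norm (c i * \<rho> ^ i)) UNIV"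
  have sumS: "(\<lambda>i. norm (c i * \<rho> ^ i)) summable_on UNIV" using rc[of \<rho>] rho by auto
  have cle: "\<bar>c i\<bar> * \<rho>^i \<le> S" for i
  proof -
    have "sum (\<lambda>i. norm (c i * \<rho> ^ i)) {i} \<le> S"
      unfolding S_def by (rule finite_sum_le_infsum[OF sumS]) auto
    then show ?thesis using rho by (simp add: abs_mult)
  qed
  have cb: "\<bar>c i\<bar> \<le> S/\<rho>^i" for i using cle[of i] rho by (simp add: field_simps)
  have S0: "S \<ge> 0" using cb[of 0] by simp
  have rep: "f x = (\<Sum>i. c i * x^i)" if "\<bar>x\<bar> < \<rho>" for x
    using rc[of x] that rho has_sum_imp_sums sums_unique by fastforce
  note pf = ps_facts[where \<rho>=\<rho> and F=c and B=S and g=f, OF rho(1) cb rep]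
  have "\<forall>x. \<bar>x\<bar> \<le> \<rho>/4 \<longrightarrow> \<bar>f x - f 0\<bar> \<le> 2*S/\<rho>*\<bar>x\<bar>"
  proof (intro allI impI)
    fix x :: real assume x: "\<bar>x\<bar> \<le> \<rho>/4"
    have "\<bar>f x - c 0\<bar> \<le> 2*S*\<bar>x\<bar>/\<rho>" using pf(2)[of x] x by simp
    then show "\<bar>f x - f 0\<bar> \<le> 2*S/\<rho>*\<bar>x\<bar>" using pf(6) by simp
  qed
  moreover have "\<rho>/4 > 0" "2*S/\<rho> \<ge> 0" using rho S0 by auto
  ultimately show ?thesis by blast
qed

lemma ra2_facts:
  fixes F :: "nat \<Rightarrow> real \<Rightarrow> real" and f :: "real \<Rightarrow> real \<Rightarrow> real"
  assumes rho: "\<rho> > 0" and Fb: "\<forall>i x. \<bar>x\<bar> \<le> \<rho>/4 \<longrightarrow> \<bar>F i x\<bar> \<le> B/\<rho>^i"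
    and rep: "\<forall>t x. \<bar>t\<bar> < \<rho> \<longrightarrow> \<bar>x\<bar> \<le> \<rho>/4 \<longrightarrow> f t x = (\<Sum>i. F i x * t^i)"
    and x: "\<bar>x\<bar> \<le> \<rho>/4"
  shows "\<And>t. \<bar>t\<bar> \<le> \<rho>/4 \<Longrightarrow> \<bar>f t x\<bar> \<le> 2*B"
    and "\<And>t. \<bar>t\<bar> \<le> \<rho>/4 \<Longrightarrow> \<bar>f t x - F 0 x\<bar> \<le> 2*B*\<bar>t\<bar>/\<rho>"
    and "\<And>t. \<bar>t\<bar> \<le> \<rho>/4 \<Longrightarrow> \<bar>f t x - F 0 x - F 1 x * t\<bar> \<le> 2*B*t^2/\<rho>^2"
    and "\<And>t. \<bar>t\<bar> < \<rho> \<Longrightarrow> ((\<lambda>s. f s x) has_real_derivative (\<Sum>n. diffs (\<lambda>i. F i x) n * t^n)) (at t)"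
    and "\<And>t. \<bar>t\<bar> \<le> \<rho>/4 \<Longrightarrow> \<bar>\<Sum>n. diffs (\<lambda>i. F i x) n * t^n\<bar> \<le> 2*B/\<rho>"
    and "f 0 x = F 0 x"
    and "(\<Sum>n. diffs (\<lambda>i. F i x) n * 0^n) = F 1 x"
    and "((\<lambda>s. \<Sum>n. diffs (\<lambda>i. F i x) n * s^n) has_real_derivative 2*F 2 x) (at 0)"
proof -
  have Fbx: "\<And>i. \<bar>F i x\<bar> \<le> B/\<rho>^i" using Fb x by blast
  have repx: "\<And>t. \<bar>t\<bar> < \<rho> \<Longrightarrow> f t x = (\<Sum>i. F i x * t^i)" using rep x by blast
  note pf = ps_facts[where g="\<lambda>s. f s x" and F="\<lambda>i. F i x", OF rho Fbx repx]
  show "\<And>t. \<bar>t\<bar> \<le> \<rho>/4 \<Longrightarrow> \<bar>f t x\<bar> \<le> 2*B" using pf(1) by blast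
  show "\<And>t. \<bar>t\<bar> \<le> \<rho>/4 \<Longrightarrow> \<bar>f t x - F 0 x\<bar> \<le> 2*B*\<bar>t\<bar>/\<rho>" using pf(2) by blast
  show "\<And>t. \<bar>t\<bar> \<le> \<rho>/4 \<Longrightarrow> \<bar>f t x - F 0 x - F 1 x * t\<bar> \<le> 2*B*t^2/\<rho>^2" using pf(3) by blast
  show "\<And>t. \<bar>t\<bar> < \<rho> \<Longrightarrow> ((\<lambda>s. f s x) has_real_derivative (\<Sum>n. diffs (\<lambda>i. F i x) n * t^n)) (at t)"
    using pf(4) by blast
  show "\<And>t. \<bar>t\<bar> \<le> \<rho>/4 \<Longrightarrow> \<bar>\<Sum>n. diffs (\<lambda>i. F i x) n * t^n\<bar> \<le> 2*B/\<rho>" using pf(5) by blast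
  show "f 0 x = F 0 x" using pf(6) by blast
  show "(\<Sum>n. diffs (\<lambda>i. F i x) n * 0^n) = F 1 x" using pf(7) by blast
  show "((\<lambda>s. \<Sum>n. diffs (\<lambda>i. F i x) n * s^n) has_real_derivative 2*F 2 x) (at 0)" using pf(8) by blast
qed

lemma disc_a_nonneg: "disc a b t x \<ge> 0 \<Longrightarrow> a t x \<ge> 0"
proof -
  assume "disc a b t x \<ge> 0"
  then have "4*(a t x)^3 \<ge> 27*(b t x)^2" by (simp add: disc_def)
  moreover have "27*(b t x)^2 \<ge> 0" by simp
  ultimately have "(a t x)^3 \<ge> 0" by linarith
  then show ?thesis by (metis not_le power_less_zero_eq odd_numeral zero_less_numeral)
qed

lemma mul_le_of_le_div:
  fixes K y B :: real
  assumes "0 \<le> K" "0 \<le> y" "y \<le> B/(K+1)"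
  shows "K*y \<le> B"
proof -
  have "y*(K+1) \<le> B" using assms by (simp add: pos_le_divide_eq)
  moreover have "K*y \<le> y*(K+1)" using assms by (simp add: algebra_simps)
  ultimately show ?thesis by linarith
qed

lemma Dbounds:
  fixes E0 E1 E2 a1 a2 a3 M KE :: real
  assumes e: "\<bar>E0\<bar> \<le> KE" "\<bar>E1\<bar> \<le> KE" "\<bar>E2\<bar> \<le> KE"
    and a: "\<bar>a1\<bar> \<le> 3*M" "\<bar>a2\<bar> \<le> 3*M^2" "\<bar>a3\<bar> \<le> M^3" and M: "0 \<le> M" "M \<le> 1"
  shows "\<bar>E0*a3\<bar> \<le> 7*KE*M^3" "\<bar>E0*a2 + E1*a3\<bar> \<le> 7*KE*M^2" "\<bar>E0*a1 + E1*a2 + E2*a3\<bar> \<le> 7*KE*M"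
proof -
  have KE: "KE \<ge> 0" using e(1) by simp
  have M21: "M^2 \<le> M" using M by (simp add: power2_eq_square mult_left_le_one_le)
  have M32: "M^3 \<le> M^2"
  proof -
    have "M^2*M \<le> M^2*1" using M by (intro mult_left_mono) auto
    then show ?thesis by (simp add: power2_eq_square power3_eq_cube)
  qed
  have p0: "\<bar>E0*a3\<bar> \<le> KE*M^3" using e a by (simp add: abs_mult mult_mono)
  have p1: "\<bar>E0*a2\<bar> \<le> KE*(3*M^2)" using e a by (simp add: abs_mult mult_mono)
  have p2: "\<bar>E1*a3\<bar> \<le> KE*M^3" using e a by (simp add: abs_mult mult_mono)
  have p3: "\<bar>E0*a1\<bar> \<le> KE*(3*M)" using e a by (simp add: abs_mult mult_mono)
  have p4: "\<bar>E1*a2\<bar> \<le> KE*(3*M^2)" using e a by (simp add: abs_mult mult_mono)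
  have p5: "\<bar>E2*a3\<bar> \<le> KE*M^3" using e a by (simp add: abs_mult mult_mono)
  have q1: "KE*M^3 \<le> KE*M^2" "KE*M^2 \<le> KE*M" using KE M32 M21 by (auto intro: mult_left_mono)
  have "KE*M^3 \<ge> 0" using KE M by simp
  then show "\<bar>E0*a3\<bar> \<le> 7*KE*M^3" using p0 by linarith
  show "\<bar>E0*a2 + E1*a3\<bar> \<le> 7*KE*M^2" using p1 p2 q1 KE M by (simp add: abs_triangle_ineq order_trans[OF abs_triangle_ineq]) 
  show "\<bar>E0*a1 + E1*a2 + E2*a3\<bar> \<le> 7*KE*M"
  proof -
    have "\<bar>E0*a1 + E1*a2 + E2*a3\<bar> \<le> \<bar>E0*a1\<bar> + \<bar>E1*a2\<bar> + \<bar>E2*a3\<bar>" by linarith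
    then show ?thesis using p3 p4 p5 q1 KE M by (simp add: algebra_simps) 
  qed
qed



theorem proposition5p1:
  fixes a b e2 :: "real \<Rightarrow> real \<Rightarrow> real"
    and a1 a2 a3 :: "real \<Rightarrow> real"
    and W V :: "(real \<times> real) set" and U N :: "real set" and T :: real
  assumes W: "open W" "(0, 0) \<in> W"
    and a_an: "real_analytic2_on a W" and b_an: "real_analytic2_on b W"
    and T: "T > 0" and U: "open U" "0 \<in> U"
    and hyp: "\<And>t x. 0 \<le> t \<Longrightarrow> t < T \<Longrightarrow> x \<in> U \<Longrightarrow> disc a b t x \<ge> 0"
    and a00: "a 0 0 = 0"
    and dta: "\<exists>d. ((\<lambda>t. a t 0) has_real_derivative d) (at 0) \<and> d \<noteq> 0"
    and V: "open V" "(0, 0) \<in> V"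
    and e2_an: "real_analytic2_on e2 V"
    and e2_pos: "\<And>t x. (t, x) \<in> V \<Longrightarrow> e2 t x > 0"
    and N: "open N" "0 \<in> N"
    and aj_an: "real_analytic1_on a1 N" "real_analytic1_on a2 N" "real_analytic1_on a3 N"
    and aj0: "a1 0 = 0" "a2 0 = 0" "a3 0 = 0"
    and weier: "\<And>t x. (t, x) \<in> V \<Longrightarrow>
        disc a b t x = e2 t x * (t ^ 3 + a1 x * t ^ 2 + a2 x * t + a3 x)"
  shows "\<exists>\<delta> > 0. \<exists>T0 > 0. \<exists>C > 0. \<forall>t x.
     (\<bar>x\<bar> < \<delta> \<and> 0 \<le> t \<and> t \<le> psi a1 a2 a3 x / 2 \<longrightarrow>
        t ^ 2 * a t x \<le> C * disc a b t x \<and>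
        \<bar>t\<bar> * \<bar>deriv (\<lambda>s. disc a b s x) t\<bar> \<le> C * disc a b t x \<and>
        \<bar>t\<bar> \<le> C * a t x) \<and>
     (\<bar>x\<bar> < \<delta> \<and> psi a1 a2 a3 x / 2 \<le> t \<and> t \<le> T0 \<longrightarrow>
        (t - psi a1 a2 a3 x) ^ 2 * a t x \<le> C * disc a b t x \<and>
        \<bar>t - psi a1 a2 a3 x\<bar> * \<bar>deriv (\<lambda>s. disc a b s x) t\<bar> \<le> C * disc a b t x \<and>
        \<bar>t - psi a1 a2 a3 x\<bar> \<le> C * a t x)"
proof -
  obtain \<rho>a Ba Fa where ra: "\<rho>a > 0" "Ba \<ge> 0" "\<And>i x. \<bar>x\<bar> \<le> \<rho>a/4 \<Longrightarrow> \<bar>Fa i x\<bar> \<le> Ba/\<rho>a^i"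
      "\<And>i x. \<bar>x\<bar> \<le> \<rho>a/4 \<Longrightarrow> \<bar>Fa i x - Fa i 0\<bar> \<le> Ba/\<rho>a^i * \<bar>x\<bar>"
      "\<And>t x. \<bar>t\<bar> < \<rho>a \<Longrightarrow> \<bar>x\<bar> \<le> \<rho>a/4 \<Longrightarrow> a t x = (\<Sum>i. Fa i x * t^i)"
    using ra2_rep[OF a_an W(2)] by blast
  obtain \<rho>b Bb Fb where rb: "\<rho>b > 0" "Bb \<ge> 0" "\<And>i x. \<bar>x\<bar> \<le> \<rho>b/4 \<Longrightarrow> \<bar>Fb i x\<bar> \<le> Bb/\<rho>b^i"
      "\<And>i x. \<bar>x\<bar> \<le> \<rho>b/4 \<Longrightarrow> \<bar>Fb i x - Fb i 0\<bar> \<le> Bb/\<rho>b^i * \<bar>x\<bar>"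
      "\<And>t x. \<bar>t\<bar> < \<rho>b \<Longrightarrow> \<bar>x\<bar> \<le> \<rho>b/4 \<Longrightarrow> b t x = (\<Sum>i. Fb i x * t^i)"
    using ra2_rep[OF b_an W(2)] by blast
  obtain \<rho>e Be Fe where re: "\<rho>e > 0" "Be \<ge> 0" "\<And>i x. \<bar>x\<bar> \<le> \<rho>e/4 \<Longrightarrow> \<bar>Fe i x\<bar> \<le> Be/\<rho>e^i"
      "\<And>i x. \<bar>x\<bar> \<le> \<rho>e/4 \<Longrightarrow> \<bar>Fe i x - Fe i 0\<bar> \<le> Be/\<rho>e^i * \<bar>x\<bar>"
      "\<And>t x. \<bar>t\<bar> < \<rho>e \<Longrightarrow> \<bar>x\<bar> \<le> \<rho>e/4 \<Longrightarrow> e2 t x = (\<Sum>i. Fe i x * t^i)"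
    using ra2_rep[OF e2_an V(2)] by blast
  obtain eV where eV: "eV > 0" "\<And>s x. \<bar>s\<bar> < eV \<Longrightarrow> \<bar>x\<bar> < eV \<Longrightarrow> (s,x) \<in> V"
    using open_box[OF V] by blast
  obtain eU where eU: "eU > 0" "\<And>x. \<bar>x\<bar> < eU \<Longrightarrow> x \<in> U" using open_int[OF U] by blast
  obtain K1 r1 where k1: "r1 > 0" "K1 \<ge> 0" "\<And>x. \<bar>x\<bar> \<le> r1 \<Longrightarrow> \<bar>a1 x - a1 0\<bar> \<le> K1*\<bar>x\<bar>"
    using ra1_lip[OF aj_an(1) N(2)] by blast
  obtain K2 r2 where k2: "r2 > 0" "K2 \<ge> 0" "\<And>x. \<bar>x\<bar> \<le> r2 \<Longrightarrow> \<bar>a2 x - a2 0\<bar> \<le> K2*\<bar>x\<bar>"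
    using ra1_lip[OF aj_an(2) N(2)] by blast
  obtain K3 r3 where k3: "r3 > 0" "K3 \<ge> 0" "\<And>x. \<bar>x\<bar> \<le> r3 \<Longrightarrow> \<bar>a3 x - a3 0\<bar> \<le> K3*\<bar>x\<bar>"
    using ra1_lip[OF aj_an(3) N(2)] by blast
  define h0 where "h0 = min (min (\<rho>a/4) (\<rho>b/4)) (min (min (\<rho>e/4) (eV/2)) (min (eU/2) (min (T/2) 1)))"
  have h0: "h0 > 0" "h0 \<le> \<rho>a/4" "h0 \<le> \<rho>b/4" "h0 \<le> \<rho>e/4" "h0 < eV" "h0 < eU" "h0 < T" "h0 \<le> 1"
    using ra(1) rb(1) re(1) eV(1) eU(1) T by (auto simp: h0_def)
  have inV: "(s,x) \<in> V" if "\<bar>s\<bar> \<le> h0" "\<bar>x\<bar> \<le> h0" for s x using eV(2) that h0 by auto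
  have inU: "x \<in> U" if "\<bar>x\<bar> \<le> h0" for x using eU(2) that h0 by auto
  have dnn: "disc a b t x \<ge> 0" if "0 \<le> t" "t \<le> h0" "\<bar>x\<bar> \<le> h0" for t x
    using hyp[OF that(1) _ inU[OF that(3)]] that h0 by auto
  have ann: "a t x \<ge> 0" if "0 \<le> t" "t \<le> h0" "\<bar>x\<bar> \<le> h0" for t x
    using disc_a_nonneg[OF dnn[OF that]] .
  have PA: "\<bar>x\<bar> \<le> \<rho>a/4" and PB: "\<bar>x\<bar> \<le> \<rho>b/4" and PE: "\<bar>x\<bar> \<le> \<rho>e/4" if "\<bar>x\<bar> \<le> h0" for x
    using that h0 by auto
  have ra3: "\<forall>i x. \<bar>x\<bar> \<le> \<rho>a/4 \<longrightarrow> \<bar>Fa i x\<bar> \<le> Ba/\<rho>a^i" using ra(3) by blast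
  have ra5: "\<forall>t x. \<bar>t\<bar> < \<rho>a \<longrightarrow> \<bar>x\<bar> \<le> \<rho>a/4 \<longrightarrow> a t x = (\<Sum>i. Fa i x * t^i)" using ra(5) by blast
  note fa = ra2_facts[OF ra(1) ra3 ra5]
  have rb3: "\<forall>i x. \<bar>x\<bar> \<le> \<rho>b/4 \<longrightarrow> \<bar>Fb i x\<bar> \<le> Bb/\<rho>b^i" using rb(3) by blast
  have rb5: "\<forall>t x. \<bar>t\<bar> < \<rho>b \<longrightarrow> \<bar>x\<bar> \<le> \<rho>b/4 \<longrightarrow> b t x = (\<Sum>i. Fb i x * t^i)" using rb(5) by blast
  note fb = ra2_facts[OF rb(1) rb3 rb5]
  have re3: "\<forall>i x. \<bar>x\<bar> \<le> \<rho>e/4 \<longrightarrow> \<bar>Fe i x\<bar> \<le> Be/\<rho>e^i" using re(3) by blast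
  have re5: "\<forall>t x. \<bar>t\<bar> < \<rho>e \<longrightarrow> \<bar>x\<bar> \<le> \<rho>e/4 \<longrightarrow> e2 t x = (\<Sum>i. Fe i x * t^i)" using re(5) by blast
  note fe = ra2_facts[OF re(1) re3 re5]
  \<comment> \<open>c = d/dt a(0,0) > 0\<close>
  define c where "c = Fa 1 0"
  have x00: "\<bar>0::real\<bar> \<le> \<rho>a/4" using ra(1) by simp
  have Fa00: "Fa 0 0 = 0" using fa(6)[OF x00] a00 by simp
  have cne: "c \<noteq> 0"
  proof -
    obtain d where d: "((\<lambda>t. a t 0) has_real_derivative d) (at 0)" "d \<noteq> 0" using dta by blast
    have "((\<lambda>s. a s 0) has_real_derivative Fa 1 0) (at 0)"
      using fa(4)[OF x00, of 0] fa(7)[OF x00] ra(1) by simp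
    then show ?thesis using DERIV_unique[OF d(1)] d(2) by (auto simp: c_def)
  qed
  have cpos: "c > 0"
  proof (rule ccontr)
    assume "\<not> c > 0"
    then have cn: "c < 0" using cne by simp
    define t0 where "t0 = min (h0/2) (-c*\<rho>a^2/(4*(Ba+1)))"
    have t0: "t0 > 0" "t0 \<le> h0" "t0 \<le> -c*\<rho>a^2/(4*(Ba+1))"
    proof -
      have "-c*\<rho>a^2 > 0" using cn ra(1) by (simp add: mult_neg_pos)
      then have "-c*\<rho>a^2/(4*(Ba+1)) > 0" using ra(2) by (intro divide_pos_pos) auto
      then show "t0 > 0" "t0 \<le> h0" "t0 \<le> -c*\<rho>a^2/(4*(Ba+1))" using h0 by (auto simp: t0_def)
    qed
    have "a t0 0 \<ge> 0" using ann[of t0 0] t0 h0 by auto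
    moreover have "\<bar>a t0 0 - Fa 0 0 - Fa 1 0 * t0\<bar> \<le> 2*Ba*t0^2/\<rho>a^2"
      using fa(3)[OF x00, of t0] t0 h0 by auto
    moreover have "2*Ba*t0^2/\<rho>a^2 \<le> -c*t0/2"
    proof -
      have "2*Ba*t0^2 \<le> 2*(Ba+1)*t0*t0" using t0 by (simp add: power2_eq_square mult_right_mono)
      also have "\<dots> \<le> 2*(Ba+1)*t0*(-c*\<rho>a^2/(4*(Ba+1)))"
        using t0 ra(2) by (intro mult_left_mono) auto
      also have "\<dots> = (-c*t0/2)*\<rho>a^2" using ra(2) by (simp add: field_simps)
      finally show ?thesis using ra(1) by (simp add: field_simps)
    qed
    ultimately have "c*t0/2 \<ge> 0" using Fa00 by (simp add: c_def abs_le_iff)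
    moreover have "c*t0 < 0" using cn t0 by (simp add: mult_neg_pos)
    ultimately show False by simp
  qed
  define e0 where "e0 = e2 0 0"
  have e0: "e0 > 0" using e2_pos[OF V(2)] by (simp add: e0_def)
  have Fe00: "Fe 0 0 = e0" using fe(6)[of 0] re(1) by (simp add: e0_def)
  define C1 where "C1 = Ba/\<rho>a + 2*Ba/\<rho>a^2"
  have C1: "C1 \<ge> 0" using ra(1,2) by (simp add: C1_def)
  define XE where "XE = 2*Be/\<rho>e + Be"
  have XE: "XE \<ge> 0" using re(1,2) by (simp add: XE_def)
  define h where "h = min h0 (min (e0/(2*(XE + 1))) (c/(2*(C1+1))))"
  have h: "h > 0" "h \<le> h0" using h0 e0 cpos XE C1 by (auto simp: h_def)
  have hXE: "XE*h \<le> e0/2"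
  proof -
    have hh: "h \<le> (e0/2)/(XE+1)" unfolding h_def by (simp add: field_simps)
    show ?thesis using mul_le_of_le_div[OF XE less_imp_le[OF h(1)] hh] .
  qed
  have hC1: "C1*h \<le> c/2"
  proof -
    have hh: "h \<le> (c/2)/(C1+1)" unfolding h_def by (simp add: field_simps)
    show ?thesis using mul_le_of_le_div[OF C1 less_imp_le[OF h(1)] hh] .
  qed
  have elow: "e2 s x \<ge> e0/2" if s: "\<bar>s\<bar> \<le> h" and x: "\<bar>x\<bar> \<le> h" for s x
  proof -
    have xe: "\<bar>x\<bar> \<le> \<rho>e/4" "\<bar>s\<bar> \<le> \<rho>e/4" using x s h h0 by auto
    have 1: "\<bar>e2 s x - Fe 0 x\<bar> \<le> 2*Be*\<bar>s\<bar>/\<rho>e" using fe(2)[OF xe(1) xe(2)] .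
    have 2: "\<bar>Fe 0 x - Fe 0 0\<bar> \<le> Be*\<bar>x\<bar>" using re(4)[OF xe(1), of 0] by simp
    have "2*Be*\<bar>s\<bar>/\<rho>e \<le> 2*Be/\<rho>e*h" using s re(1,2) by (simp add: divide_right_mono mult_left_mono)
    moreover have "Be*\<bar>x\<bar> \<le> Be*h" using x re(2) by (simp add: mult_left_mono)
    ultimately have "e2 s x \<ge> e0 - XE*h" using 1 2 Fe00 by (simp add: XE_def algebra_simps abs_le_iff) 
    then show ?thesis using hXE by linarith
  qed
  have abounds: "a t x \<le> Fa 0 x + C1*t \<and> c/2*t \<le> a t x \<and> c/2 \<le> Fa 1 x \<and> Fa 1 x \<le> Ba/\<rho>a"
    if t: "0 \<le> t" "t \<le> h" and x: "\<bar>x\<bar> \<le> h" for t x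
  proof -
    have xa: "\<bar>x\<bar> \<le> \<rho>a/4" "\<bar>t\<bar> \<le> \<rho>a/4" using x t h h0 by auto
    have 1: "\<bar>a t x - Fa 0 x - Fa 1 x * t\<bar> \<le> 2*Ba*t^2/\<rho>a^2" using fa(3)[OF xa(1) xa(2)] .
    have 2: "\<bar>Fa 1 x - c\<bar> \<le> Ba/\<rho>a*\<bar>x\<bar>" using ra(4)[OF xa(1), of 1] by (simp add: c_def)
    have 3: "\<bar>Fa 1 x\<bar> \<le> Ba/\<rho>a" using ra(3)[OF xa(1), of 1] by simp
    have h1: "h \<le> 1" using h h0 by simp
    have tt1: "t*t \<le> t*h" "t*h \<le> t*1" using t h1 by (intro mult_left_mono; simp)+
    then have tt: "t^2 \<le> t*h" "t^2 \<le> t" by (simp_all add: power2_eq_square)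
    have q1: "2*Ba*t^2/\<rho>a^2 \<le> (2*Ba/\<rho>a^2)*t"
      using tt(2) ra(1,2) by (simp add: divide_right_mono mult_left_mono)
    have q2: "2*Ba*t^2/\<rho>a^2 \<le> (2*Ba/\<rho>a^2*h)*t"
    proof -
      have "2*Ba*t^2/\<rho>a^2 = (2*Ba/\<rho>a^2)*t^2" by simp
      also have "\<dots> \<le> (2*Ba/\<rho>a^2)*(t*h)" using tt(1) ra(1,2) by (intro mult_left_mono) auto
      finally show ?thesis by (simp add: mult_ac)
    qed
    have q3: "Ba/\<rho>a*\<bar>x\<bar> \<le> Ba/\<rho>a*h" using x ra(1,2) by (intro mult_left_mono) auto
    have up: "a t x \<le> Fa 0 x + C1*t"
    proof -
      have "Fa 1 x * t \<le> Ba/\<rho>a * t" using 3 t by (intro mult_right_mono) auto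
      then show ?thesis using 1 q1 by (simp add: C1_def algebra_simps abs_le_iff)
    qed
    have F1: "Fa 1 x \<ge> c - (Ba/\<rho>a*h)" using 2 q3 by (simp add: abs_le_iff)
    have F1': "c/2 \<le> Fa 1 x"
    proof -
      have "(Ba/\<rho>a)*h \<le> C1*h" using h ra(1,2) by (intro mult_right_mono) (auto simp: C1_def)
      then show ?thesis using F1 hC1 by linarith
    qed
    have A0: "Fa 0 x \<ge> 0" using ann[of 0 x] fa(6)[OF xa(1)] x h by simp
    have low: "c/2*t \<le> a t x"
    proof -
      define P where "P = Ba/\<rho>a*h*t"
      define Q where "Q = 2*Ba/\<rho>a^2*h*t"
      have f1: "(c - (Ba/\<rho>a*h))*t \<le> Fa 1 x * t" using F1 t by (intro mult_right_mono) auto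
      then have f1': "c*t - P \<le> Fa 1 x * t" by (simp add: P_def algebra_simps)
      have "(Ba/\<rho>a*h + 2*Ba/\<rho>a^2*h)*t \<le> c/2*t" using hC1 t by (intro mult_right_mono) (auto simp: C1_def algebra_simps)
      then have f2: "P + Q \<le> c/2*t" by (simp add: P_def Q_def algebra_simps)
      have f3: "2*Ba*t^2/\<rho>a^2 \<le> Q" using q2 by (simp add: Q_def mult_ac)
      have f4: "Fa 0 x + Fa 1 x * t - 2*Ba*t^2/\<rho>a^2 \<le> a t x" using 1 by (simp add: abs_le_iff)
      show ?thesis using f1' f2 f3 f4 A0 by linarith
    qed
    show ?thesis using up low F1' 3 by (simp add: abs_le_iff)
  qed
  define c1 where "c1 = c/2"
  define c2 where "c2 = Ba/\<rho>a"
  define KE where "KE = Be + Be/\<rho>e + Be/\<rho>e^2"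
  define K where "K = Ba/\<rho>a^2 + Bb/\<rho>b^2 + 7*KE"
  have KE: "KE \<ge> 0" using re(1,2) by (simp add: KE_def)
  have K: "K \<ge> 0" using ra(1,2) rb(1,2) KE by (simp add: K_def)
  have c1: "c1 > 0" using cpos by (simp add: c1_def)
  define \<epsilon> where "\<epsilon> = min 1 (7*c1^2/(864*(K+1)))"
  have eps: "0 \<le> \<epsilon>" "\<epsilon> \<le> 1" "864*K*\<epsilon> \<le> 7*c1^2"
  proof -
    show "0 \<le> \<epsilon>" "\<epsilon> \<le> 1" using K by (auto simp: \<epsilon>_def)
    have "\<epsilon> \<le> (7*c1^2/864)/(K+1)" by (simp add: \<epsilon>_def)
    from mul_le_of_le_div[OF K _ this] \<open>0 \<le> \<epsilon>\<close> show "864*K*\<epsilon> \<le> 7*c1^2" by simp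
  qed
  define \<eta> where "\<eta> = min 1 (min (7*c1^2/(192*(K+1))) (27*\<epsilon>^2/(4+K)))"
  have eta: "\<eta> \<le> 1" "192*K*\<eta> \<le> 7*c1^2" "(4+K)*\<eta> \<le> 27*\<epsilon>^2" "\<eta> \<ge> 0"
  proof -
    show "\<eta> \<le> 1" "\<eta> \<ge> 0" using K by (auto simp: \<eta>_def)
    have "\<eta> \<le> (7*c1^2/192)/(K+1)" by (simp add: \<eta>_def)
    from mul_le_of_le_div[OF K _ this] \<open>0 \<le> \<eta>\<close> show "192*K*\<eta> \<le> 7*c1^2" by simp
    have "\<eta> \<le> 27*\<epsilon>^2/(4+K)" by (simp add: \<eta>_def)
    then show "(4+K)*\<eta> \<le> 27*\<epsilon>^2" using K by (simp add: pos_le_divide_eq mult.commute)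
  qed
  define L where "L = 1 + (24*c2*K + K^2 + 16*K + 4*K*(12*c2^2+67*K))/(7*c1^2)"
  have c2: "c2 \<ge> 0" using ra(1,2) by (simp add: c2_def)
  have L: "L \<ge> 1" "24*c2*K \<le> 7*c1^2*L" "K^2 \<le> 7*c1^2*L" "16*K \<le> 7*c1^2*L" "4*K*(12*c2^2+67*K) \<le> 7*c1^2*L"
  proof -
    define S where "S = 24*c2*K + K^2 + 16*K + 4*K*(12*c2^2+67*K)"
    have S: "S \<ge> 0" "24*c2*K \<ge> 0" "K^2 \<ge> 0" "16*K \<ge> 0" "4*K*(12*c2^2+67*K) \<ge> 0"
      using K c2 by (auto simp: S_def)
    have kp: "7*c1^2 > 0" using c1 by simp
    have LS0: "L = 1 + S/(7*c1^2)" by (simp add: L_def S_def)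
    show "L \<ge> 1" using S(1) kp by (simp add: LS0)
    have LS: "7*c1^2*L = 7*c1^2 + S" using kp by (simp add: LS0 field_simps)
    show "24*c2*K \<le> 7*c1^2*L" "K^2 \<le> 7*c1^2*L" "16*K \<le> 7*c1^2*L" "4*K*(12*c2^2+67*K) \<le> 7*c1^2*L"
      using LS S kp S_def by linarith+
  qed
  define \<delta> where "\<delta> = min h (min r1 (min r2 (min r3 (min (\<eta>/(Ba+1)) (min ((h/4)/3/(K1+1))
      (min ((h/4)^2/3/(K2+1)) ((h/4)^3/3/(K3+1))))))))"
  have \<delta>: "\<delta> > 0" "\<delta> \<le> h" "\<delta> \<le> r1" "\<delta> \<le> r2" "\<delta> \<le> r3" "\<delta> \<le> \<eta>/(Ba+1)"
     "\<delta> \<le> (h/4)/3/(K1+1)" "\<delta> \<le> (h/4)^2/3/(K2+1)" "\<delta> \<le> (h/4)^3/3/(K3+1)"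
  proof -
    have ep: "\<epsilon> > 0" using c1 K unfolding \<epsilon>_def by (auto intro!: divide_pos_pos)
    then have "27*\<epsilon>^2/(4+K) > 0" using K by (intro divide_pos_pos) auto
    then have "\<eta> > 0" using c1 K unfolding \<eta>_def by (auto intro!: divide_pos_pos)
    then have p: "\<eta>/(Ba+1) > 0" "(h/4)/3/(K1+1) > 0" "(h/4)^2/3/(K2+1) > 0" "(h/4)^3/3/(K3+1) > 0"
      using ra(2) h k1 k2 k3 by (auto intro!: divide_pos_pos)
    show "\<delta> > 0" unfolding \<delta>_def using p h k1 k2 k3 by (simp only: min_less_iff_conj)
    show "\<delta> \<le> h" unfolding \<delta>_def by (rule min.cobounded1)
    show "\<delta> \<le> r1" unfolding \<delta>_def by (rule min.coboundedI2, rule min.cobounded1)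
    show "\<delta> \<le> r2" unfolding \<delta>_def by (rule min.coboundedI2, rule min.coboundedI2, rule min.cobounded1)
    show "\<delta> \<le> r3" unfolding \<delta>_def by (rule min.coboundedI2, rule min.coboundedI2, rule min.coboundedI2, rule min.cobounded1)
    show "\<delta> \<le> \<eta>/(Ba+1)" unfolding \<delta>_def by (rule min.coboundedI2, rule min.coboundedI2, rule min.coboundedI2, rule min.coboundedI2, rule min.cobounded1)
    show "\<delta> \<le> (h/4)/3/(K1+1)" unfolding \<delta>_def by (rule min.coboundedI2, rule min.coboundedI2, rule min.coboundedI2, rule min.coboundedI2, rule min.coboundedI2, rule min.cobounded1)
    show "\<delta> \<le> (h/4)^2/3/(K2+1)" unfolding \<delta>_def by (rule min.coboundedI2, rule min.coboundedI2, rule min.coboundedI2, rule min.coboundedI2, rule min.coboundedI2, rule min.coboundedI2, rule min.cobounded1)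
    show "\<delta> \<le> (h/4)^3/3/(K3+1)" unfolding \<delta>_def by (rule min.coboundedI2, rule min.coboundedI2, rule min.coboundedI2, rule min.coboundedI2, rule min.coboundedI2, rule min.coboundedI2, rule min.cobounded2)
  qed
  define Cf where "Cf = 3*max L C1/(e0/2)"
  define Cd where "Cd = (h*(2*Be/\<rho>e))/(e0/2) + 3"
  define Ca where "Ca = 2/c"
  define C where "C = Cf + Cd + Ca"
  have Cs: "Cf \<ge> 0" "Cd \<ge> 3" "Ca > 0" using e0 h re(1,2) cpos L by (auto simp: Cf_def Cd_def Ca_def)
  have Cpos: "C > 0" using Cs by (simp add: C_def)
  have key: "\<phi>^2 * a t x \<le> C * disc a b t x \<and>
        \<bar>\<phi>\<bar> * \<bar>deriv (\<lambda>s. disc a b s x) t\<bar> \<le> C * disc a b t x \<and> \<bar>\<phi>\<bar> \<le> C * a t x"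
    if x: "\<bar>x\<bar> < \<delta>" and t: "0 \<le> t"
      and reg: "(t \<le> psi a1 a2 a3 x / 2 \<and> \<phi> = t) \<or> (psi a1 a2 a3 x / 2 \<le> t \<and> t \<le> h/2 \<and> \<phi> = t - psi a1 a2 a3 x)"
    for t x \<phi>
  proof -
    have xh: "\<bar>x\<bar> \<le> h" "\<bar>x\<bar> \<le> h0" using x \<delta> h by auto
    have xa: "\<bar>x\<bar> \<le> \<rho>a/4" "\<bar>x\<bar> \<le> \<rho>b/4" "\<bar>x\<bar> \<le> \<rho>e/4" using xh h0 by auto
    define cub where "cub s = s^3 + a1 x * s^2 + a2 x * s + a3 x" for s
    have wz: "disc a b s x = e2 s x * cub s" if "\<bar>s\<bar> \<le> h0" for s
      using weier[OF inV[OF that xh(2)]] by (simp add: cub_def)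
    have epos: "e2 s x > 0" if "\<bar>s\<bar> \<le> h0" for s using e2_pos[OF inV[OF that xh(2)]] .
    have cubnn: "cub s \<ge> 0" if "0 \<le> s" "s \<le> h0" for s
    proof -
      have "0 \<le> e2 s x * cub s" using dnn[OF that xh(2)] wz[of s] that by simp
      then show ?thesis using epos[of s] that by (simp add: zero_le_mult_iff)
    qed
    have a3nn: "a3 x \<ge> 0" using cubnn[of 0] h0 by (simp add: cub_def)
    have pos: "\<And>s. 0 < s \<Longrightarrow> s < h \<Longrightarrow> s^3 + a1 x * s^2 + a2 x * s + a3 x \<ge> 0"
      using cubnn h by (auto simp: cub_def)
    have aj1: "\<bar>a1 x\<bar> \<le> (h/4)/3"
    proof -
      have "\<bar>a1 x\<bar> \<le> K1*\<bar>x\<bar>" using k1(3)[of x] x \<delta> aj0 by simp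
      also have "\<dots> \<le> K1*\<delta>" using x k1(2) by (intro mult_left_mono) auto
      also have "\<dots> \<le> (h/4)/3" using mul_le_of_le_div[OF k1(2) less_imp_le[OF \<delta>(1)] \<delta>(7)] .
      finally show ?thesis .
    qed
    have aj2: "\<bar>a2 x\<bar> \<le> (h/4)^2/3"
    proof -
      have "\<bar>a2 x\<bar> \<le> K2*\<bar>x\<bar>" using k2(3)[of x] x \<delta> aj0 by simp
      also have "\<dots> \<le> K2*\<delta>" using x k2(2) by (intro mult_left_mono) auto
      also have "\<dots> \<le> (h/4)^2/3" using mul_le_of_le_div[OF k2(2) less_imp_le[OF \<delta>(1)] \<delta>(8)] .
      finally show ?thesis .
    qed
    have aj3: "\<bar>a3 x\<bar> \<le> (h/4)^3/3"
    proof -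
      have "\<bar>a3 x\<bar> \<le> K3*\<bar>x\<bar>" using k3(3)[of x] x \<delta> aj0 by simp
      also have "\<dots> \<le> K3*\<delta>" using x k3(2) by (intro mult_left_mono) auto
      also have "\<dots> \<le> (h/4)^3/3" using mul_le_of_le_div[OF k3(2) less_imp_le[OF \<delta>(1)] \<delta>(9)] .
      finally show ?thesis .
    qed
    have CM: "\<exists>M. 0 \<le> M \<and> M \<le> h/4 \<and> \<bar>a1 x\<bar> \<le> 3*M \<and> \<bar>a2 x\<bar> \<le> 3*M^2 \<and> \<bar>a3 x\<bar> \<le> M^3 \<and>
       0 \<le> psi a1 a2 a3 x \<and> psi a1 a2 a3 x \<le> h/4 \<and>
     (\<forall>t \<phi>. 0 \<le> t \<and> t < h \<and> ((t \<le> psi a1 a2 a3 x/2 \<and> \<phi> = t) \<or> (psi a1 a2 a3 x/2 \<le> t \<and> \<phi> = t - psi a1 a2 a3 x)) \<longrightarrow>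
        \<bar>\<phi>\<bar> \<le> t \<and> 0 \<le> t^3 + a1 x*t^2 + a2 x*t + a3 x \<and>
        \<bar>\<phi>\<bar> * \<bar>3*t^2 + 2*a1 x*t + a2 x\<bar> \<le> 3 * (t^3 + a1 x*t^2 + a2 x*t + a3 x) \<and>
        \<phi>^2 * (t + M) \<le> 3 * (t^3 + a1 x*t^2 + a2 x*t + a3 x))"
      using cubic_main[where ?a1.0="a1 x" and ?a2.0="a2 x" and ?a3.0="a3 x" and T'=h, OF a3nn pos h(1) aj1 aj2 aj3]
      unfolding psi_def wroots_def .
    then obtain M where M: "0 \<le> M" "M \<le> h/4" "\<bar>a1 x\<bar> \<le> 3*M" "\<bar>a2 x\<bar> \<le> 3*M^2" "\<bar>a3 x\<bar> \<le> M^3"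
       "0 \<le> psi a1 a2 a3 x" "psi a1 a2 a3 x \<le> h/4"
      and MM: "\<forall>t \<phi>. 0 \<le> t \<and> t < h \<and> ((t \<le> psi a1 a2 a3 x/2 \<and> \<phi> = t) \<or> (psi a1 a2 a3 x/2 \<le> t \<and> \<phi> = t - psi a1 a2 a3 x)) \<longrightarrow>
        \<bar>\<phi>\<bar> \<le> t \<and> 0 \<le> t^3 + a1 x*t^2 + a2 x*t + a3 x \<and>
        \<bar>\<phi>\<bar> * \<bar>3*t^2 + 2*a1 x*t + a2 x\<bar> \<le> 3 * (t^3 + a1 x*t^2 + a2 x*t + a3 x) \<and>
        \<phi>^2 * (t + M) \<le> 3 * (t^3 + a1 x*t^2 + a2 x*t + a3 x)"
      by blast
    have th: "t < h" using reg M(7) h by auto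
    have regh: "(t \<le> psi a1 a2 a3 x/2 \<and> \<phi> = t) \<or> (psi a1 a2 a3 x/2 \<le> t \<and> \<phi> = t - psi a1 a2 a3 x)" using reg by auto
    have mm: "\<bar>\<phi>\<bar> \<le> t" "0 \<le> cub t" "\<bar>\<phi>\<bar> * \<bar>3*t^2 + 2*a1 x*t + a2 x\<bar> \<le> 3 * cub t" "\<phi>^2 * (t + M) \<le> 3 * cub t"
      using MM[rule_format, of t \<phi>] t th regh unfolding cub_def by blast+
    have t_h: "\<bar>t\<bar> \<le> h" "t \<le> h0" "\<bar>t\<bar> \<le> h0" using t th h by auto
    define E where "E = e2 t x"
    define \<Delta> where "\<Delta> = disc a b t x"
    have E: "E \<ge> e0/2" using elow[OF t_h(1) xh(1)] by (simp add: E_def)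
    have \<Delta>E: "\<Delta> = E * cub t" using wz[OF t_h(3)] by (simp add: \<Delta>_def E_def)
    have \<Delta>0: "\<Delta> \<ge> 0" using \<Delta>E E e0 mm(2) by simp
    have cub\<Delta>: "cub t \<le> (2/e0) * \<Delta>"
    proof -
      have "e0/2 * cub t \<le> E * cub t" using E mm(2) by (intro mult_right_mono) auto
      then show ?thesis using e0 \<Delta>E by (simp add: field_simps)
    qed
    have ab: "a t x \<le> Fa 0 x + C1*t" "c/2*t \<le> a t x" "c/2 \<le> Fa 1 x" "Fa 1 x \<le> Ba/\<rho>a"
      using abounds[OF t less_imp_le[OF th] xh(1)] by auto
    have "c/2*t \<ge> 0" using cpos t by simp
    then have aN: "a t x \<ge> 0" using ab(2) by linarith
    have I3: "\<bar>\<phi>\<bar> \<le> C * a t x"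
    proof -
      have "t \<le> Ca * a t x" using ab(2) cpos by (simp add: Ca_def field_simps)
      moreover have "Ca * a t x \<le> C * a t x" using Cs aN by (intro mult_right_mono) (auto simp: C_def)
      ultimately show ?thesis using mm(1) by linarith
    qed
    have h0p: "h0 > 0" using h0 by simp
    have ids: "27*(Fb 0 x)^2 = 4*(Fa 0 x)^3 - Fe 0 x * a3 x"
      "54*(Fb 0 x)*(Fb 1 x) = 12*(Fa 0 x)^2*(Fa 1 x) - (Fe 0 x * a2 x + Fe 1 x * a3 x)"
      "27*(Fb 1 x)^2 = 12*(Fa 0 x)*(Fa 1 x)^2 + 12*(Fa 0 x)^2*(Fa 2 x) - 54*(Fb 0 x)*(Fb 2 x)
         - (Fe 0 x * a1 x + Fe 1 x * a2 x + Fe 2 x * a3 x)"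
    proof -
      have G0: "4*a s x^3 - 27*b s x^2 = e2 s x * (s^3 + a1 x * s^2 + a2 x * s + a3 x)" if "\<bar>s\<bar> < h0" for s
        using wz[of s] that by (simp add: disc_def cub_def)
      have dA: "((\<lambda>s. a s x) has_real_derivative (\<Sum>n. diffs (\<lambda>i. Fa i x) n * s^n)) (at s)" if "\<bar>s\<bar> < h0" for s
        using fa(4)[OF xa(1), of s] that h0 ra(1) by auto
      have dB: "((\<lambda>s. b s x) has_real_derivative (\<Sum>n. diffs (\<lambda>i. Fb i x) n * s^n)) (at s)" if "\<bar>s\<bar> < h0" for s
        using fb(4)[OF xa(2), of s] that h0 rb(1) by auto
      have dE: "((\<lambda>s. e2 s x) has_real_derivative (\<Sum>n. diffs (\<lambda>i. Fe i x) n * s^n)) (at s)" if "\<bar>s\<bar> < h0" for s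
        using fe(4)[OF xa(3), of s] that h0 re(1) by auto
      note C = coeff_ids[where ga="\<lambda>s. a s x" and gb="\<lambda>s. b s x" and ge="\<lambda>s. e2 s x",
          OF h0p G0 dA dB dE fa(8)[OF xa(1)] fb(8)[OF xa(2)] fe(8)[OF xa(3)]
             fa(6)[OF xa(1)] fa(7)[OF xa(1)] fb(6)[OF xa(2)] fb(7)[OF xa(2)] fe(6)[OF xa(3)] fe(7)[OF xa(3)]]
      show "27*(Fb 0 x)^2 = 4*(Fa 0 x)^3 - Fe 0 x * a3 x" using C(1) .
      show "54*(Fb 0 x)*(Fb 1 x) = 12*(Fa 0 x)^2*(Fa 1 x) - (Fe 0 x * a2 x + Fe 1 x * a3 x)" using C(2) .
      show "27*(Fb 1 x)^2 = 12*(Fa 0 x)*(Fa 1 x)^2 + 12*(Fa 0 x)^2*(Fa 2 x) - 54*(Fb 0 x)*(Fb 2 x)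
         - (Fe 0 x * a1 x + Fe 1 x * a2 x + Fe 2 x * a3 x)" using C(3) .
    qed
    have EK: "\<bar>Fe i x\<bar> \<le> KE" if "i \<le> 2" for i
    proof -
      have "\<bar>Fe i x\<bar> \<le> Be/\<rho>e^i" using re(3)[OF xa(3)] .
      moreover have "Be/\<rho>e^i \<le> KE" using that re(1,2)
        by (cases i; cases "i - 1"; auto simp: KE_def numeral_2_eq_2 le_Suc_eq)
      ultimately show ?thesis by linarith
    qed
    have M1: "M \<le> 1" using M(2) h h0 by simp
    note DB = Dbounds[OF EK[of 0] EK[of 1] EK[of 2] M(3) M(4) M(5) M(1) M1]
    have K7: "7*KE \<le> K" using ra(1,2) rb(1,2) by (simp add: K_def)
    have D0: "\<bar>Fe 0 x * a3 x\<bar> \<le> K*M^3" using DB(1) mult_right_mono[OF K7, of "M^3"] M(1) by simp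
    have D1: "\<bar>Fe 0 x * a2 x + Fe 1 x * a3 x\<bar> \<le> K*M^2" using DB(2) mult_right_mono[OF K7, of "M^2"] M(1) by simp
    have D2: "\<bar>Fe 0 x * a1 x + Fe 1 x * a2 x + Fe 2 x * a3 x\<bar> \<le> K*M" using DB(3) mult_right_mono[OF K7, of M] M(1) by simp
    have nn: "Ba/\<rho>a^2 \<ge> 0" "Bb/\<rho>b^2 \<ge> 0" using ra(1,2) rb(1,2) by auto
    have A2: "\<bar>Fa 2 x\<bar> \<le> K" using ra(3)[OF xa(1), of 2] nn KE unfolding K_def by linarith
    have B2: "\<bar>Fb 2 x\<bar> \<le> K" using rb(3)[OF xa(2), of 2] nn KE unfolding K_def by linarith
    have u0: "Fa 0 x \<ge> 0" using ann[of 0 x] fa(6)[OF xa(1)] xh h0 by simp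
    have uh: "Fa 0 x \<le> \<eta>"
    proof -
      have "Fa 0 x \<le> Ba*\<bar>x\<bar>" using ra(4)[OF xa(1), of 0] Fa00 by simp
      also have "\<dots> \<le> Ba*\<delta>" using x ra(2) by (intro mult_left_mono) auto
      also have "\<dots> \<le> \<eta>" using mul_le_of_le_div[OF ra(2) less_imp_le[OF \<delta>(1)] \<delta>(6)] .
      finally show ?thesis .
    qed
    have A0L: "Fa 0 x \<le> L*M"
      by (rule crux[OF ids(1) ids(2) ids(3) u0 c1 _ _ K A2 B2 M(1) D0 D1 D2 eps eta(1-3) L uh])
         (use ab in \<open>auto simp: c1_def c2_def\<close>)
    have I1: "\<phi>^2 * a t x \<le> C * \<Delta>"
    proof -
      define m where "m = max L C1"
      have "a t x \<le> L*M + C1*t" using ab(1) A0L by linarith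
      also have "\<dots> \<le> m*M + m*t" using M(1) t by (intro add_mono mult_right_mono) (auto simp: m_def)
      finally have am: "a t x \<le> m*(t+M)" by (simp add: algebra_simps)
      have "\<phi>^2 * a t x \<le> \<phi>^2 * (m*(t+M))" by (rule mult_left_mono[OF am]) simp
      also have "\<dots> = m * (\<phi>^2*(t+M))" by (simp add: mult_ac)
      also have "\<dots> \<le> m * (3*cub t)" using mm(4) L(1) by (intro mult_left_mono) (auto simp: m_def)
      also have "\<dots> \<le> m * (3*((2/e0)*\<Delta>))" using cub\<Delta> L(1) by (intro mult_left_mono) (auto simp: m_def)
      also have "\<dots> = Cf * \<Delta>" by (simp add: Cf_def m_def)
      also have "\<dots> \<le> C * \<Delta>" using \<Delta>0 Cs by (intro mult_right_mono) (auto simp: C_def)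
      finally show ?thesis .
    qed
    define De where "De = (\<Sum>n. diffs (\<lambda>i. Fe i x) n * t^n)"
    have tr: "\<bar>t\<bar> < \<rho>e" "\<bar>t\<bar> \<le> \<rho>e/4" using t_h h0 re(1) by auto
    have dE: "((\<lambda>s. e2 s x) has_real_derivative De) (at t)" using fe(4)[OF xa(3) tr(1)] by (simp add: De_def)
    have De: "\<bar>De\<bar> \<le> 2*Be/\<rho>e" using fe(5)[OF xa(3) tr(2)] by (simp add: De_def)
    have dP: "(cub has_real_derivative (3*t^2 + 2*a1 x*t + a2 x)) (at t)"
      unfolding cub_def by (rule derivative_eq_intros refl | simp add: power2_eq_square algebra_simps)+
    have dM: "((\<lambda>s. e2 s x * cub s) has_real_derivative (De * cub t + E * (3*t^2 + 2*a1 x*t + a2 x))) (at t)"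
      using DERIV_mult[OF dE dP] by (simp add: E_def mult.commute)
    have dD: "((\<lambda>s. disc a b s x) has_real_derivative (De * cub t + E * (3*t^2 + 2*a1 x*t + a2 x))) (at t)"
    proof (rule has_field_derivative_transform_within_open[OF dM, of "{-h0<..<h0}"])
      show "open {-h0<..<h0}" by simp
      show "t \<in> {-h0<..<h0}" using t th h by auto
      show "\<And>z. z \<in> {-h0<..<h0} \<Longrightarrow> e2 z x * cub z = disc a b z x" using wz by auto
    qed
    have deq: "deriv (\<lambda>s. disc a b s x) t = De * cub t + E * (3*t^2 + 2*a1 x*t + a2 x)"
      by (rule DERIV_imp_deriv[OF dD])
    have I2: "\<bar>\<phi>\<bar> * \<bar>deriv (\<lambda>s. disc a b s x) t\<bar> \<le> C * \<Delta>"
    proof -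
      have Epos: "E > 0" using E e0 by linarith
      have "\<bar>\<phi>\<bar> * \<bar>De * cub t + E * (3*t^2 + 2*a1 x*t + a2 x)\<bar>
          \<le> \<bar>\<phi>\<bar> * (\<bar>De\<bar> * cub t + E * \<bar>3*t^2 + 2*a1 x*t + a2 x\<bar>)"
        using mm(2) Epos by (intro mult_left_mono) (auto simp: abs_mult intro: order_trans[OF abs_triangle_ineq])
      also have "\<dots> = (\<bar>\<phi>\<bar> * \<bar>De\<bar>) * cub t + E * (\<bar>\<phi>\<bar> * \<bar>3*t^2 + 2*a1 x*t + a2 x\<bar>)" by (simp add: algebra_simps)
      also have "\<dots> \<le> (h * (2*Be/\<rho>e)) * ((2/e0)*\<Delta>) + E * (3 * cub t)"
      proof (rule add_mono)
        have ph: "\<bar>\<phi>\<bar> \<le> h" using mm(1) th by linarith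
        have p1: "\<bar>\<phi>\<bar> * \<bar>De\<bar> \<le> h * (2*Be/\<rho>e)" using ph De by (rule mult_mono) (use h in auto)
        have p2: "0 \<le> h * (2*Be/\<rho>e)" using h re(1,2) by simp
        show "(\<bar>\<phi>\<bar> * \<bar>De\<bar>) * cub t \<le> (h * (2*Be/\<rho>e)) * ((2/e0)*\<Delta>)"
          by (rule mult_mono[OF p1 cub\<Delta> p2 mm(2)])
        show "E * (\<bar>\<phi>\<bar> * \<bar>3*t^2 + 2*a1 x*t + a2 x\<bar>) \<le> E * (3 * cub t)"
          using mm(3) Epos by (intro mult_left_mono) auto
      qed
      also have "\<dots> = Cd * \<Delta>" using e0 by (simp add: Cd_def \<Delta>E field_simps)
      also have "\<dots> \<le> C * \<Delta>" using \<Delta>0 Cs by (intro mult_right_mono) (auto simp: C_def)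
      finally show ?thesis by (simp add: deq)
    qed
    show ?thesis using I1 I2 I3 by (simp add: \<Delta>_def)
  qed
  have fin1: "t ^ 2 * a t x \<le> C * disc a b t x \<and>
        \<bar>t\<bar> * \<bar>deriv (\<lambda>s. disc a b s x) t\<bar> \<le> C * disc a b t x \<and> \<bar>t\<bar> \<le> C * a t x"
    if A: "\<bar>x\<bar> < \<delta> \<and> 0 \<le> t \<and> t \<le> psi a1 a2 a3 x / 2" for t x
  proof -
    have "(t \<le> psi a1 a2 a3 x / 2 \<and> t = t) \<or> (psi a1 a2 a3 x / 2 \<le> t \<and> t \<le> h/2 \<and> t = t - psi a1 a2 a3 x)" using A by simp
    from key[of x t t, OF _ _ this] A show ?thesis by simp
  qed
  have fin2: "(t - psi a1 a2 a3 x) ^ 2 * a t x \<le> C * disc a b t x \<and>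
        \<bar>t - psi a1 a2 a3 x\<bar> * \<bar>deriv (\<lambda>s. disc a b s x) t\<bar> \<le> C * disc a b t x \<and>
        \<bar>t - psi a1 a2 a3 x\<bar> \<le> C * a t x"
    if A: "\<bar>x\<bar> < \<delta> \<and> psi a1 a2 a3 x / 2 \<le> t \<and> t \<le> h/2" for t x
  proof -
    have p0: "psi a1 a2 a3 x \<ge> 0" by (simp add: psi_def)
    then have t0: "0 \<le> t" using A by linarith
    have "(t \<le> psi a1 a2 a3 x / 2 \<and> t - psi a1 a2 a3 x = t) \<or> (psi a1 a2 a3 x / 2 \<le> t \<and> t \<le> h/2 \<and> t - psi a1 a2 a3 x = t - psi a1 a2 a3 x)" using A by simp
    from key[of x t "t - psi a1 a2 a3 x", OF _ t0 this] A show ?thesis by simp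
  qed
  have h2: "h/2 > 0" using h by simp
  show ?thesis
    apply (rule exI[of _ \<delta>], rule conjI[OF \<delta>(1)])
    apply (rule exI[of _ "h/2"], rule conjI[OF h2])
    apply (rule exI[of _ C], rule conjI[OF Cpos])
    using fin1 fin2 by blast
qed


end
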